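(* Let $M\in\mathbb R^{\mathbb N\times\mathbb N}$ be bounded on $\ell_2$ and elliptic (there is $C_{\rm ell}>0$ with $Mx\cdot x\ge C_{\rm ell}\|x\|_{\ell_2}^2$), let $n_1=1<n_2<\cdots$ be a block structure, let $M(i,j)=0$ for $|i-j|>b_0$, and $M\in\mathcal B(d,b_0)$ for a metric $d$ on $\mathbb N$. Let $M=LU$ be the block-$LU$-factorization with $L$ block-lower triangular, $U$ block-upper triangular, $L(i,i)=I$. Then for every $\varepsilon>0$ there exist $b\in\mathbb N$ and a block-lower triangular $L_\varepsilon^{-1}\in\mathcal B(d,b)$ with $L_\varepsilon^{-1}(i,i)=I$ and $L_\varepsilon^{-1}(i,j)=0$ for $|i-j|>b$, such that $\|L^{-1}-L_\varepsilon^{-1}\|_2\le\varepsilon$; $L_\varepsilon^{-1}$ is invertible and $\sup_{\varepsilon>0}(\|L_\varepsilon\|_2+\|L_\varepsilon^{-1}\|_2)<\infty$.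
   Context: $\|\cdot\|_2$ is the operator norm on $\ell_2$. $M\in\mathcal B(d,b)$ iff $M_{ij}=0$ whenever $d(i,j)>b$. Block notation: $M(i,j)=M|_{\{n_i,\dots,n_{i+1}-1\}\times\{n_j,\dots,n_{j+1}-1\}}$; block-lower triangular means $M(i,j)=0$ for $i<j$. *)

theory Defs
  imports "HOL-Analysis.Analysis"
begin

text \<open>Infinite real matrices indexed by nat (0-based), acting on l2 = square-summable sequences.\<close>

type_synonym imat = "nat \<Rightarrow> nat \<Rightarrow> real"
type_synonym iseq = "nat \<Rightarrow> real"

definition in_l2 :: "iseq \<Rightarrow> bool" where
  "in_l2 x \<longleftrightarrow> summable (\<lambda>i. (x i)\<^sup>2)"

definition l2norm :: "iseq \<Rightarrow> real" where
  "l2norm x = sqrt (\<Sum>i. (x i)\<^sup>2)"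

definition matvec :: "imat \<Rightarrow> iseq \<Rightarrow> iseq" where
  "matvec A x = (\<lambda>i. \<Sum>j. A i j * x j)"

definition mat_diff :: "imat \<Rightarrow> imat \<Rightarrow> imat" where
  "mat_diff A B = (\<lambda>i j. A i j - B i j)"

text \<open>Matrix product (entries as series; finitely many nonzero terms for triangular factors).\<close>
definition mat_mult :: "imat \<Rightarrow> imat \<Rightarrow> imat" where
  "mat_mult A B = (\<lambda>i k. \<Sum>j. A i j * B j k)"

definition bounded_l2 :: "imat \<Rightarrow> bool" where
  "bounded_l2 A \<longleftrightarrow> (\<exists>C. \<forall>x. in_l2 x \<longrightarrow>
      (\<forall>i. summable (\<lambda>j. A i j * x j)) \<and> in_l2 (matvec A x) \<and>
      l2norm (matvec A x) \<le> C * l2norm x)"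

definition opnorm :: "imat \<Rightarrow> real" where
  "opnorm A = Sup {l2norm (matvec A x) | x. in_l2 x \<and> l2norm x \<le> 1}"

definition elliptic :: "imat \<Rightarrow> bool" where
  "elliptic A \<longleftrightarrow> (\<exists>C>0. \<forall>x. in_l2 x \<longrightarrow>
      (\<Sum>i. matvec A x i * x i) \<ge> C * (l2norm x)\<^sup>2)"

text \<open>Block structure: n 0 = 0 < n 1 < ... (0-based version of n_1 = 1 < n_2 < ...).\<close>
definition block_structure :: "(nat \<Rightarrow> nat) \<Rightarrow> bool" where
  "block_structure n \<longleftrightarrow> n 0 = 0 \<and> strict_mono n"

definition blockset :: "(nat \<Rightarrow> nat) \<Rightarrow> nat \<Rightarrow> nat set" where
  "blockset n i = {n i ..< n (Suc i)}"

definition block_zero :: "(nat \<Rightarrow> nat) \<Rightarrow> imat \<Rightarrow> nat \<Rightarrow> nat \<Rightarrow> bool" where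
  "block_zero n A i j \<longleftrightarrow> (\<forall>k\<in>blockset n i. \<forall>l\<in>blockset n j. A k l = 0)"

definition block_identity :: "(nat \<Rightarrow> nat) \<Rightarrow> imat \<Rightarrow> nat \<Rightarrow> bool" where
  "block_identity n A i \<longleftrightarrow>
     (\<forall>k\<in>blockset n i. \<forall>l\<in>blockset n i. A k l = (if k = l then 1 else 0))"

definition block_lower :: "(nat \<Rightarrow> nat) \<Rightarrow> imat \<Rightarrow> bool" where
  "block_lower n A \<longleftrightarrow> (\<forall>i j. i < j \<longrightarrow> block_zero n A i j)"

definition block_upper :: "(nat \<Rightarrow> nat) \<Rightarrow> imat \<Rightarrow> bool" where
  "block_upper n A \<longleftrightarrow> (\<forall>i j. j < i \<longrightarrow> block_zero n A i j)"

definition block_banded :: "(nat \<Rightarrow> nat) \<Rightarrow> nat \<Rightarrow> imat \<Rightarrow> bool" where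
  "block_banded n b A \<longleftrightarrow> (\<forall>i j. b < dist (real i) (real j) \<longrightarrow> block_zero n A i j)"

definition nat_metric :: "(nat \<Rightarrow> nat \<Rightarrow> real) \<Rightarrow> bool" where
  "nat_metric d \<longleftrightarrow> (\<forall>i j. d i j = 0 \<longleftrightarrow> i = j) \<and> (\<forall>i j. d i j = d j i) \<and>
     (\<forall>i j k. d i k \<le> d i j + d j k)"

definition in_B :: "(nat \<Rightarrow> nat \<Rightarrow> real) \<Rightarrow> nat \<Rightarrow> imat \<Rightarrow> bool" where
  "in_B d b A \<longleftrightarrow> (\<forall>i j. d i j > real b \<longrightarrow> A i j = 0)"

definition id_mat :: imat where
  "id_mat = (\<lambda>i j. if i = j then 1 else 0)"

end

theory Submission
  imports Defs
begin

definition mv :: "nat set \<Rightarrow> imat \<Rightarrow> iseq \<Rightarrow> iseq" where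
  "mv S A x = (\<lambda>i. \<Sum>j\<in>S. A i j * x j)"

definition bnd :: "nat set \<Rightarrow> nat set \<Rightarrow> imat \<Rightarrow> real \<Rightarrow> bool" where
  "bnd S T A c \<longleftrightarrow> 0 \<le> c \<and> (\<forall>x. L2_set (mv S A x) T \<le> c * L2_set x S)"

definition mm :: "nat set \<Rightarrow> imat \<Rightarrow> imat \<Rightarrow> imat" where
  "mm S A B = (\<lambda>i k. \<Sum>j\<in>S. A i j * B j k)"

lemma L2_set_subset: "finite T \<Longrightarrow> T' \<subseteq> T \<Longrightarrow> L2_set f T' \<le> L2_set f T"
  unfolding L2_set_def by (intro real_sqrt_le_mono sum_mono2) auto

lemma bnd_mono: "bnd S T A c \<Longrightarrow> c \<le> c' \<Longrightarrow> bnd S T A c'"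
  unfolding bnd_def by (meson L2_set_nonneg mult_right_mono order_trans)

lemma mv_restrict:
  assumes "finite S" "S' \<subseteq> S"
  shows "mv S A (\<lambda>j. if j \<in> S' then x j else 0) = mv S' A x"
proof
  fix i
  have "mv S A (\<lambda>j. if j \<in> S' then x j else 0) i = (\<Sum>j\<in>S. if j \<in> S' then A i j * x j else 0)"
    unfolding mv_def by (intro sum.cong) auto
  also have "\<dots> = (\<Sum>j\<in>S'. A i j * x j)"
    using assms by (simp add: sum.If_cases Int_absorb1 Int_commute)
  finally show "mv S A (\<lambda>j. if j \<in> S' then x j else 0) i = mv S' A x i" by (simp add: mv_def)
qed

lemma L2_restrict:
  assumes "finite S" "S' \<subseteq> S"
  shows "L2_set (\<lambda>j. if j \<in> S' then x j else 0) S = L2_set x S'"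
proof -
  have "(\<Sum>j\<in>S. ((if j \<in> S' then x j else 0))\<^sup>2) = (\<Sum>j\<in>S. if j \<in> S' then (x j)\<^sup>2 else 0)"
    by (intro sum.cong) auto
  also have "\<dots> = (\<Sum>j\<in>S'. (x j)\<^sup>2)"
    using assms by (simp add: sum.If_cases Int_absorb1 Int_commute)
  finally show ?thesis unfolding L2_set_def by simp
qed

lemma bnd_sub:
  assumes "bnd S T A c" "finite S" "finite T" "S' \<subseteq> S" "T' \<subseteq> T"
  shows "bnd S' T' A c"
  unfolding bnd_def
proof (intro conjI allI)
  show "0 \<le> c" using assms(1) by (simp add: bnd_def)
  fix x :: iseq
  let ?x = "\<lambda>j. if j \<in> S' then x j else 0"
  have "L2_set (mv S' A x) T' \<le> L2_set (mv S' A x) T" using assms by (intro L2_set_subset) auto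
  also have "\<dots> = L2_set (mv S A ?x) T" using mv_restrict[OF assms(2,4)] by simp
  also have "\<dots> \<le> c * L2_set ?x S" using assms(1) by (simp add: bnd_def)
  also have "\<dots> = c * L2_set x S'" using L2_restrict[OF assms(2,4)] by simp
  finally show "L2_set (mv S' A x) T' \<le> c * L2_set x S'" .
qed

lemma bnd_cong:
  assumes "bnd S T A c" "\<And>i j. i \<in> T \<Longrightarrow> j \<in> S \<Longrightarrow> A i j = B i j"
  shows "bnd S T B c"
proof -
  have "L2_set (mv S B x) T = L2_set (mv S A x) T" for x
    unfolding mv_def using assms(2) by (intro L2_set_cong) auto
  then show ?thesis using assms(1) by (simp add: bnd_def)
qed

lemma bnd_zero: "(\<And>i j. i \<in> T \<Longrightarrow> j \<in> S \<Longrightarrow> A i j = 0) \<Longrightarrow> bnd S T A 0"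
  unfolding bnd_def mv_def by (simp add: L2_set_0')

lemma bnd_add:
  assumes "bnd S T A a" "bnd S T B b"
  shows "bnd S T (\<lambda>i j. A i j + B i j) (a + b)"
  unfolding bnd_def
proof (intro conjI allI)
  show "0 \<le> a + b" using assms by (simp add: bnd_def)
  fix x
  have "mv S (\<lambda>i j. A i j + B i j) x = (\<lambda>i. mv S A x i + mv S B x i)"
    unfolding mv_def by (auto simp: algebra_simps sum.distrib)
  then have "L2_set (mv S (\<lambda>i j. A i j + B i j) x) T \<le> L2_set (mv S A x) T + L2_set (mv S B x) T"
    using L2_set_triangle_ineq by metis
  also have "\<dots> \<le> a * L2_set x S + b * L2_set x S" using assms by (intro add_mono) (auto simp: bnd_def)
  finally show "L2_set (mv S (\<lambda>i j. A i j + B i j) x) T \<le> (a + b) * L2_set x S" by (simp add: algebra_simps)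
qed

lemma bnd_scale:
  assumes "bnd S T A a"
  shows "bnd S T (\<lambda>i j. r * A i j) (\<bar>r\<bar> * a)"
  unfolding bnd_def
proof (intro conjI allI)
  show "0 \<le> \<bar>r\<bar> * a" using assms by (simp add: bnd_def)
  fix x
  have "mv S (\<lambda>i j. r * A i j) x = (\<lambda>i. r * mv S A x i)"
    unfolding mv_def by (auto simp: algebra_simps sum_distrib_left)
  then have "L2_set (mv S (\<lambda>i j. r * A i j) x) T = \<bar>r\<bar> * L2_set (mv S A x) T"
    by (simp add: L2_set_right_distrib abs_mult L2_set_def real_sqrt_mult power_mult_distrib sum_distrib_left[symmetric])
  also have "\<dots> \<le> \<bar>r\<bar> * (a * L2_set x S)" using assms by (intro mult_left_mono) (auto simp: bnd_def)
  finally show "L2_set (mv S (\<lambda>i j. r * A i j) x) T \<le> \<bar>r\<bar> * a * L2_set x S" by simp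
qed

lemma bnd_neg: "bnd S T A a \<Longrightarrow> bnd S T (\<lambda>i j. - A i j) a"
  using bnd_scale[of S T A a "-1"] by simp

lemma bnd_diff: "bnd S T A a \<Longrightarrow> bnd S T B b \<Longrightarrow> bnd S T (\<lambda>i j. A i j - B i j) (a + b)"
  using bnd_add[of S T A a "\<lambda>i j. - B i j" b] bnd_neg by simp

lemma mv_mm: "finite T \<Longrightarrow> mv S (mm T B A) x = mv T B (mv S A x)"
  unfolding mv_def mm_def
  by (auto simp: sum_distrib_left sum_distrib_right mult.assoc intro!: ext sum.swap)

lemma bnd_comp:
  assumes "finite T" "bnd S T A a" "bnd T R B b"
  shows "bnd S R (mm T B A) (b * a)"
  unfolding bnd_def
proof (intro conjI allI)
  show "0 \<le> b * a" using assms by (simp add: bnd_def)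
  fix x
  have "L2_set (mv S (mm T B A) x) R = L2_set (mv T B (mv S A x)) R" using mv_mm[OF assms(1)] by simp
  also have "\<dots> \<le> b * L2_set (mv S A x) T" using assms(3) by (simp add: bnd_def)
  also have "\<dots> \<le> b * (a * L2_set x S)" using assms by (intro mult_left_mono) (auto simp: bnd_def)
  finally show "L2_set (mv S (mm T B A) x) R \<le> b * a * L2_set x S" by simp
qed

lemma mv_id: "finite S \<Longrightarrow> i \<in> S \<Longrightarrow> mv S id_mat x i = x i"
proof -
  assume a: "finite S" "i \<in> S"
  have "mv S id_mat x i = (\<Sum>j\<in>S. if i = j then x j else 0)"
    unfolding mv_def id_mat_def by (intro sum.cong) auto
  then show ?thesis using a by simp
qed

lemma bnd_id: "finite S \<Longrightarrow> bnd S S id_mat 1"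
  unfolding bnd_def by (auto simp: mv_id intro!: eq_refl L2_set_cong)

lemma bnd_transpose:
  assumes "finite S" "finite T" "bnd S T A c"
  shows "bnd T S (\<lambda>i j. A j i) c"
  unfolding bnd_def
proof (intro conjI allI)
  show c0: "0 \<le> c" using assms by (simp add: bnd_def)
  fix z
  define y where "y = mv T (\<lambda>i j. A j i) z"
  have "(L2_set y S)\<^sup>2 = (\<Sum>j\<in>S. y j * y j)"
    using assms by (simp add: L2_set_def sum_nonneg power2_eq_square)
  also have "\<dots> = (\<Sum>j\<in>S. (\<Sum>i\<in>T. A i j * z i) * y j)"
    by (simp add: y_def mv_def)
  also have "\<dots> = (\<Sum>i\<in>T. z i * mv S A y i)"
    by (simp add: mv_def sum_distrib_left sum_distrib_right mult_ac sum.swap[of _ S])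
  also have "\<dots> \<le> (\<Sum>i\<in>T. \<bar>z i\<bar> * \<bar>mv S A y i\<bar>)"
    by (intro sum_mono) (simp add: abs_mult[symmetric])
  also have "\<dots> \<le> L2_set z T * L2_set (mv S A y) T" by (rule L2_set_mult_ineq)
  also have "\<dots> \<le> L2_set z T * (c * L2_set y S)"
    using assms by (intro mult_left_mono) (auto simp: bnd_def)
  finally have *: "(L2_set y S)\<^sup>2 \<le> c * L2_set z T * L2_set y S" by (simp add: mult_ac)
  show "L2_set y S \<le> c * L2_set z T"
  proof (cases "L2_set y S = 0")
    case True then show ?thesis using c0 by simp
  next
    case False
    then have "L2_set y S > 0" using L2_set_nonneg[of y S] by linarith
    then show ?thesis using * by (simp add: power2_eq_square)
  qed
qed

lemma bnd_exists:
  assumes "finite S" "finite T"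
  shows "\<exists>c. bnd S T A c"
proof
  let ?c = "\<Sum>i\<in>T. \<Sum>j\<in>S. \<bar>A i j\<bar>"
  show "bnd S T A ?c"
    unfolding bnd_def
  proof (intro conjI allI)
    show "0 \<le> ?c" by (intro sum_nonneg) auto
    fix x
    have xj: "\<bar>x j\<bar> \<le> L2_set x S" if "j \<in> S" for j
    proof -
      have "\<bar>x j\<bar> = L2_set x {j}" by simp
      also have "\<dots> \<le> L2_set x S" using that assms by (intro L2_set_subset) auto
      finally show ?thesis .
    qed
    have "L2_set (mv S A x) T \<le> (\<Sum>i\<in>T. \<bar>mv S A x i\<bar>)" by (rule L2_set_le_sum_abs)
    also have "\<dots> \<le> (\<Sum>i\<in>T. \<Sum>j\<in>S. \<bar>A i j\<bar> * L2_set x S)"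
    proof (intro sum_mono)
      fix i assume "i \<in> T"
      have "\<bar>mv S A x i\<bar> \<le> (\<Sum>j\<in>S. \<bar>A i j * x j\<bar>)" unfolding mv_def by (rule sum_abs)
      also have "\<dots> \<le> (\<Sum>j\<in>S. \<bar>A i j\<bar> * L2_set x S)"
        using xj by (intro sum_mono) (auto simp: abs_mult intro: mult_left_mono)
      finally show "\<bar>mv S A x i\<bar> \<le> (\<Sum>j\<in>S. \<bar>A i j\<bar> * L2_set x S)" .
    qed
    also have "\<dots> = ?c * L2_set x S" by (simp add: sum_distrib_right)
    finally show "L2_set (mv S A x) T \<le> ?c * L2_set x S" .
  qed
qed

lemma bnd_zero_entry:
  assumes "bnd S T A 0" "finite S" "finite T" "i \<in> T" "j \<in> S"
  shows "A i j = 0"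
proof -
  let ?x = "\<lambda>k. if k = j then 1 else (0::real)"
  have "L2_set (mv S A ?x) T \<le> 0" using assms(1) by (auto simp: bnd_def)
  then have "L2_set (mv S A ?x) T = 0" using L2_set_nonneg[of "mv S A ?x" T] by linarith
  then have "mv S A ?x i = 0" using assms by (simp add: L2_set_eq_0_iff)
  moreover have "mv S A ?x i = A i j" using assms unfolding mv_def by (simp add: if_distrib cong: if_cong)
  ultimately show ?thesis by simp
qed



definition qf :: "nat set \<Rightarrow> imat \<Rightarrow> iseq \<Rightarrow> real" where
  "qf S A x = (\<Sum>i\<in>S. x i * mv S A x i)"

definition ell :: "nat set \<Rightarrow> imat \<Rightarrow> real \<Rightarrow> bool" where
  "ell S A C \<longleftrightarrow> (\<forall>x. C * (L2_set x S)\<^sup>2 \<le> qf S A x)"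

lemma ell_lower:
  assumes "finite S" "0 < C" "ell S A C"
  shows "C * L2_set x S \<le> L2_set (mv S A x) S"
proof -
  have "C * (L2_set x S)\<^sup>2 \<le> qf S A x" using assms by (simp add: ell_def)
  also have "\<dots> \<le> (\<Sum>i\<in>S. \<bar>x i\<bar> * \<bar>mv S A x i\<bar>)"
    unfolding qf_def by (intro sum_mono) (simp add: abs_mult[symmetric])
  also have "\<dots> \<le> L2_set x S * L2_set (mv S A x) S" by (rule L2_set_mult_ineq)
  finally have *: "C * (L2_set x S)\<^sup>2 \<le> L2_set x S * L2_set (mv S A x) S" .
  show ?thesis
  proof (cases "L2_set x S = 0")
    case True then show ?thesis by simp
  next
    case False
    then have "L2_set x S > 0" using L2_set_nonneg[of x S] by linarith
    then show ?thesis using * by (simp add: power2_eq_square mult.assoc[symmetric])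
  qed
qed

lemma L2_sq: "finite S \<Longrightarrow> (L2_set x S)\<^sup>2 = (\<Sum>i\<in>S. (x i)\<^sup>2)"
  by (simp add: L2_set_def sum_nonneg)

lemma contraction:
  assumes S: "finite S" and C: "0 < C" "C \<le> B" and bA: "bnd S S A B" and eA: "ell S A C"
  shows "bnd S S (\<lambda>i j. id_mat i j - (C / B\<^sup>2) * A i j) (sqrt (1 - C\<^sup>2 / B\<^sup>2))"
  unfolding bnd_def
proof (intro conjI allI)
  have B0: "0 < B" using C by linarith
  have "C\<^sup>2 \<le> B\<^sup>2" using C by (intro power_mono) auto
  then have "C\<^sup>2 / B\<^sup>2 \<le> 1" using B0 by (simp add: divide_le_eq)
  then show "0 \<le> sqrt (1 - C\<^sup>2 / B\<^sup>2)" by simp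
  fix x :: iseq
  define w where "w = C / B\<^sup>2"
  have w0: "0 \<le> w" using C B0 by (simp add: w_def)
  let ?y = "mv S A x"
  have eq: "mv S (\<lambda>i j. id_mat i j - w * A i j) x i = x i - w * ?y i" if "i \<in> S" for i
  proof -
    have "mv S (\<lambda>i j. id_mat i j - w * A i j) x i = mv S id_mat x i - w * ?y i"
      unfolding mv_def by (simp add: algebra_simps sum_subtractf sum_distrib_left)
    then show ?thesis using mv_id[OF S that] by simp
  qed
  have "(L2_set (mv S (\<lambda>i j. id_mat i j - w * A i j) x) S)\<^sup>2 = (\<Sum>i\<in>S. (x i - w * ?y i)\<^sup>2)"
    using S eq by (simp add: L2_sq)
  also have "\<dots> = (\<Sum>i\<in>S. (x i)\<^sup>2) - 2 * w * qf S A x + w\<^sup>2 * (\<Sum>i\<in>S. (?y i)\<^sup>2)"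
    unfolding qf_def by (simp add: power2_eq_square algebra_simps sum.distrib sum_subtractf sum_distrib_left)
  also have "\<dots> \<le> (L2_set x S)\<^sup>2 - 2 * w * (C * (L2_set x S)\<^sup>2) + w\<^sup>2 * (B * L2_set x S)\<^sup>2"
  proof -
    have "qf S A x \<ge> C * (L2_set x S)\<^sup>2" using eA by (simp add: ell_def)
    moreover have "(\<Sum>i\<in>S. (?y i)\<^sup>2) \<le> (B * L2_set x S)\<^sup>2"
    proof -
      have "L2_set ?y S \<le> B * L2_set x S" using bA by (simp add: bnd_def)
      then have "(L2_set ?y S)\<^sup>2 \<le> (B * L2_set x S)\<^sup>2" by (intro power_mono) auto
      then show ?thesis using S by (simp add: L2_sq)
    qed
    ultimately show ?thesis using w0 S
      by (simp add: L2_sq) (intro add_mono diff_mono mult_left_mono order_refl; simp)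
  qed
  also have "\<dots> = (1 - C\<^sup>2 / B\<^sup>2) * (L2_set x S)\<^sup>2"
    using B0 unfolding w_def by (simp add: field_simps power2_eq_square)
  finally have *: "(L2_set (mv S (\<lambda>i j. id_mat i j - w * A i j) x) S)\<^sup>2 \<le> (sqrt (1 - C\<^sup>2 / B\<^sup>2) * L2_set x S)\<^sup>2"
    using \<open>C\<^sup>2 / B\<^sup>2 \<le> 1\<close> by (simp add: power_mult_distrib)
  show "L2_set (mv S (\<lambda>i j. id_mat i j - (C / B\<^sup>2) * A i j) x) S \<le> sqrt (1 - C\<^sup>2 / B\<^sup>2) * L2_set x S"
    using power2_le_imp_le[OF *] \<open>C\<^sup>2 / B\<^sup>2 \<le> 1\<close> by (simp add: w_def)
qed

fun pw :: "nat set \<Rightarrow> imat \<Rightarrow> nat \<Rightarrow> imat" where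
  "pw S A 0 = id_mat"
| "pw S A (Suc m) = mm S A (pw S A m)"

lemma bnd_pw: "finite S \<Longrightarrow> bnd S S A q \<Longrightarrow> bnd S S (pw S A m) (q ^ m)"
  by (induction m) (auto intro: bnd_id bnd_comp)

lemma mm_id_left: "i \<in> S \<Longrightarrow> finite S \<Longrightarrow> mm S id_mat B i k = B i k"
proof -
  assume a: "i \<in> S" "finite S"
  have "mm S id_mat B i k = (\<Sum>j\<in>S. if i = j then B j k else 0)"
    unfolding mm_def id_mat_def by (intro sum.cong) auto
  then show ?thesis using a by simp
qed

lemma mm_id_right: "k \<in> S \<Longrightarrow> finite S \<Longrightarrow> mm S B id_mat i k = B i k"
proof -
  assume a: "k \<in> S" "finite S"
  have "mm S B id_mat i k = (\<Sum>j\<in>S. if j = k then B i j else 0)"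
    unfolding mm_def id_mat_def by (intro sum.cong) auto
  then show ?thesis using a by simp
qed

lemma mm_assoc: "finite S \<Longrightarrow> finite T \<Longrightarrow> mm S (mm T A B) C = mm T A (mm S B C)"
  unfolding mm_def
  by (auto simp: sum_distrib_left sum_distrib_right mult.assoc intro!: ext sum.swap)

definition polyR :: "nat set \<Rightarrow> imat \<Rightarrow> real \<Rightarrow> nat \<Rightarrow> imat" where
  "polyR S R w k = (\<lambda>i j. w * (\<Sum>m<k. pw S R m i j))"

lemma poly_identity:
  assumes S: "finite S" and R: "\<And>a b. a \<in> S \<Longrightarrow> b \<in> S \<Longrightarrow> R a b = id_mat a b - w * A a b"
    and t: "t \<in> S"
  shows "mm S A (polyR S R w k) t l = id_mat t l - pw S R k t l"
proof -
  have "mm S A (polyR S R w k) t l = (\<Sum>m<k. \<Sum>r\<in>S. (w * A t r) * pw S R m r l)"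
    unfolding mm_def polyR_def by (simp add: sum_distrib_left mult_ac sum.swap[of _ "{..<k}"])
  also have "\<dots> = (\<Sum>m<k. \<Sum>r\<in>S. (id_mat t r - R t r) * pw S R m r l)"
    using R t by (intro sum.cong refl) auto
  also have "\<dots> = (\<Sum>m<k. pw S R m t l - pw S R (Suc m) t l)"
    by (intro sum.cong refl) (simp add: left_diff_distrib sum_subtractf mm_id_left[OF t S, unfolded mm_def] mm_def)
  also have "\<dots> = pw S R 0 t l - pw S R k t l" by (rule sum_lessThan_telescope')
  finally show ?thesis by simp
qed

lemma pw_sparse:
  fixes dl :: "nat \<Rightarrow> nat \<Rightarrow> real"
  assumes refl: "\<And>a. dl a a = 0" and tri: "\<And>a b c. dl a c \<le> dl a b + dl b c"
    and R: "\<And>a b. R a b \<noteq> 0 \<Longrightarrow> dl a b \<le> \<beta>"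
  shows "pw S R m i j \<noteq> 0 \<Longrightarrow> dl i j \<le> m * \<beta>"
proof (induction m arbitrary: i)
  case 0 then show ?case by (auto simp: id_mat_def refl split: if_splits)
next
  case (Suc m)
  then obtain r where "R i r * pw S R m r j \<noteq> 0" by (auto simp: mm_def intro: sum.not_neutral_contains_not_neutral)
  then have "R i r \<noteq> 0" "pw S R m r j \<noteq> 0" by auto
  then have "dl i r \<le> \<beta>" "dl r j \<le> m * \<beta>" using R Suc.IH by auto
  then show ?case using tri[where a=i and b=r and c=j] by (simp add: algebra_simps)
qed

lemma polyR_sparse:
  fixes dl :: "nat \<Rightarrow> nat \<Rightarrow> real"
  assumes refl: "\<And>a. dl a a = 0" and tri: "\<And>a b c. dl a c \<le> dl a b + dl b c"
    and R: "\<And>a b. R a b \<noteq> 0 \<Longrightarrow> dl a b \<le> \<beta>" and b0: "0 \<le> \<beta>"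
  shows "polyR S R w k i j \<noteq> 0 \<Longrightarrow> dl i j \<le> real (k - 1) * \<beta>"
proof -
  assume "polyR S R w k i j \<noteq> 0"
  then obtain m where m: "m < k" "pw S R m i j \<noteq> 0"
    by (auto simp: polyR_def intro: sum.not_neutral_contains_not_neutral)
  have "dl i j \<le> m * \<beta>" by (rule pw_sparse[where dl=dl and R=R, OF refl tri R m(2)])
  also have "\<dots> \<le> real (k - 1) * \<beta>" using m b0 by (intro mult_right_mono) auto
  finally show ?thesis .
qed



lemma bs_mono: "block_structure n \<Longrightarrow> a \<le> b \<Longrightarrow> n a \<le> n b"
  unfolding block_structure_def by (simp add: strict_mono_less_eq)

lemma sum_blocks:
  assumes "block_structure n"
  shows "(\<Sum>i<n K. g i) = (\<Sum>N<K. \<Sum>i\<in>blockset n N. g i)"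
proof (induction K)
  case 0 then show ?case using assms by (simp add: block_structure_def)
next
  case (Suc K)
  have le: "n K \<le> n (Suc K)" using bs_mono[OF assms] by simp
  have "{..<n (Suc K)} = {..<n K} \<union> {n K..<n (Suc K)}" using le by auto
  then have "(\<Sum>i<n (Suc K). g i) = (\<Sum>i<n K. g i) + (\<Sum>i\<in>{n K..<n (Suc K)}. g i)"
    by (simp add: sum.union_disjoint ivl_disj_int)
  then show ?case using Suc by (simp add: blockset_def)
qed

lemma L2_set_sum_le:
  assumes "finite J"
  shows "L2_set (\<lambda>i. \<Sum>j\<in>J. g j i) S \<le> (\<Sum>j\<in>J. L2_set (g j) S)"
  using assms
proof (induction J rule: finite_induct)
  case empty then show ?case by (simp add: L2_set_0')
next
  case (insert a J)
  have "L2_set (\<lambda>i. \<Sum>j\<in>insert a J. g j i) S = L2_set (\<lambda>i. g a i + (\<Sum>j\<in>J. g j i)) S"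
    using insert by simp
  also have "\<dots> \<le> L2_set (g a) S + L2_set (\<lambda>i. \<Sum>j\<in>J. g j i) S" by (rule L2_set_triangle_ineq)
  also have "\<dots> \<le> L2_set (g a) S + (\<Sum>j\<in>J. L2_set (g j) S)" using insert by simp
  finally show ?case using insert by simp
qed

lemma weighted_CS:
  fixes w a :: "nat \<Rightarrow> real"
  assumes "\<And>j. j \<in> J \<Longrightarrow> 0 \<le> w j"
  shows "(\<Sum>j\<in>J. w j * a j)\<^sup>2 \<le> (\<Sum>j\<in>J. w j) * (\<Sum>j\<in>J. w j * (a j)\<^sup>2)"
proof -
  have "(\<Sum>j\<in>J. w j * a j) = (\<Sum>j\<in>J. sqrt (w j) * (sqrt (w j) * a j))"
    using assms by (intro sum.cong) (auto simp: mult.assoc[symmetric])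
  also have "(\<dots>)\<^sup>2 \<le> (\<Sum>j\<in>J. (sqrt (w j))\<^sup>2) * (\<Sum>j\<in>J. (sqrt (w j) * a j)\<^sup>2)"
    by (rule Cauchy_Schwarz_ineq_sum)
  also have "\<dots> = (\<Sum>j\<in>J. w j) * (\<Sum>j\<in>J. w j * (a j)\<^sup>2)"
    using assms by (simp add: power_mult_distrib)
  finally show ?thesis .
qed

lemma shift_sum_le:
  fixes f :: "nat \<Rightarrow> real"
  assumes "\<And>m. 0 \<le> f m" "j < K"
  shows "(\<Sum>N<K. if j \<le> N then f (N - j) else 0) \<le> (\<Sum>m<K. f m)"
proof -
  have "(\<Sum>N<K. if j \<le> N then f (N - j) else 0) = (\<Sum>N\<in>{j..<K}. f (N - j))"
    by (simp add: sum.If_cases) (intro sum.cong; auto)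
  also have "\<dots> = (\<Sum>m\<in>(\<lambda>N. N - j) ` {j..<K}. f m)"
    by (subst sum.reindex) (auto simp: inj_on_def)
  also have "\<dots> \<le> (\<Sum>m<K. f m)" using assms by (intro sum_mono2) auto
  finally show ?thesis .
qed

lemma conv_ineq:
  fixes f a :: "nat \<Rightarrow> real"
  assumes f0: "\<And>m. 0 \<le> f m"
  shows "(\<Sum>N<K. (\<Sum>j\<le>N. f (N - j) * a j)\<^sup>2) \<le> (\<Sum>m<K. f m)\<^sup>2 * (\<Sum>j<K. (a j)\<^sup>2)"
proof -
  let ?s = "\<Sum>m<K. f m"
  have s0: "0 \<le> ?s" using f0 by (simp add: sum_nonneg)
  have "(\<Sum>N<K. (\<Sum>j\<le>N. f (N - j) * a j)\<^sup>2) \<le> (\<Sum>N<K. ?s * (\<Sum>j\<le>N. f (N - j) * (a j)\<^sup>2))"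
  proof (intro sum_mono)
    fix N assume N: "N \<in> {..<K}"
    let ?X = "\<Sum>j\<le>N. f (N - j) * (a j)\<^sup>2"
    have c1: "(\<Sum>j\<le>N. f (N - j) * a j)\<^sup>2 \<le> (\<Sum>j\<le>N. f (N - j)) * ?X"
      using f0 by (intro weighted_CS) auto
    have c2: "(\<Sum>j\<le>N. f (N - j)) = (\<Sum>m\<le>N. f m)"
      by (rule sum.reindex_bij_witness[of _ "\<lambda>j. N - j" "\<lambda>j. N - j"]) (auto simp: atMost_iff)
    have c3: "(\<Sum>m\<le>N. f m) \<le> ?s" using N f0 by (intro sum_mono2) auto
    have nn: "0 \<le> ?X" using f0 by (intro sum_nonneg) simp
    have "(\<Sum>j\<le>N. f (N - j)) * ?X \<le> ?s * ?X" using c2 c3 nn by (simp add: mult_right_mono)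
    with c1 show "(\<Sum>j\<le>N. f (N - j) * a j)\<^sup>2 \<le> ?s * ?X" by linarith
  qed
  also have "\<dots> = ?s * (\<Sum>j<K. (a j)\<^sup>2 * (\<Sum>N<K. if j \<le> N then f (N - j) else 0))"
  proof -
    have e1: "(\<Sum>j\<le>N. f (N - j) * (a j)\<^sup>2) = (\<Sum>j<K. if j \<le> N then f (N - j) * (a j)\<^sup>2 else 0)" if "N < K" for N
    proof -
      have "{..<K} \<inter> {j. j \<le> N} = {..N}" using that by auto
      then show ?thesis by (simp add: sum.If_cases)
    qed
    have "(\<Sum>N<K. \<Sum>j\<le>N. f (N - j) * (a j)\<^sup>2) = (\<Sum>N<K. \<Sum>j<K. if j \<le> N then f (N - j) * (a j)\<^sup>2 else 0)"
      by (rule sum.cong[OF refl]) (rule e1, simp)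
    also have "\<dots> = (\<Sum>j<K. \<Sum>N<K. if j \<le> N then f (N - j) * (a j)\<^sup>2 else 0)"
      by (rule sum.swap)
    also have "\<dots> = (\<Sum>j<K. (a j)\<^sup>2 * (\<Sum>N<K. if j \<le> N then f (N - j) else 0))"
      unfolding sum_distrib_left by (intro sum.cong refl) (simp add: mult.commute)
    finally show ?thesis by (simp add: sum_distrib_left[symmetric])
  qed
  also have "\<dots> \<le> ?s * (\<Sum>j<K. (a j)\<^sup>2 * ?s)"
  proof (rule mult_left_mono[OF sum_mono s0])
    fix j assume "j \<in> {..<K}"
    then show "(a j)\<^sup>2 * (\<Sum>N<K. if j \<le> N then f (N - j) else 0) \<le> (a j)\<^sup>2 * ?s"
      using shift_sum_le[of f j K] f0 by (intro mult_left_mono) auto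
  qed
  also have "\<dots> = ?s\<^sup>2 * (\<Sum>j<K. (a j)\<^sup>2)"
  proof -
    have "(\<Sum>j<K. (a j)\<^sup>2 * ?s) = (\<Sum>j<K. (a j)\<^sup>2) * ?s" by (rule sum_distrib_right[symmetric])
    then show ?thesis by (simp only: power2_eq_square[of ?s] mult_ac)
  qed
  finally show ?thesis .
qed

lemma conv_bnd:
  assumes bs: "block_structure n" and f0: "\<And>m. 0 \<le> f m"
    and blk: "\<And>N j. N < K \<Longrightarrow> j \<le> N \<Longrightarrow> bnd (blockset n j) (blockset n N) A (f (N - j))"
    and up: "\<And>N j i l. N < K \<Longrightarrow> N < j \<Longrightarrow> j < K \<Longrightarrow> i \<in> blockset n N \<Longrightarrow> l \<in> blockset n j \<Longrightarrow> A i l = 0"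
  shows "bnd {..<n K} {..<n K} A (\<Sum>m<K. f m)"
  unfolding bnd_def
proof (intro conjI allI)
  show s0: "0 \<le> (\<Sum>m<K. f m)" using f0 by (simp add: sum_nonneg)
  fix x :: iseq
  let ?a = "\<lambda>j. L2_set x (blockset n j)"
  have rowN: "L2_set (mv {..<n K} A x) (blockset n N) \<le> (\<Sum>j\<le>N. f (N - j) * ?a j)" if N: "N < K" for N
  proof -
    have "mv {..<n K} A x i = (\<Sum>j\<le>N. mv (blockset n j) A x i)" if i: "i \<in> blockset n N" for i
    proof -
      have "mv {..<n K} A x i = (\<Sum>j<K. mv (blockset n j) A x i)"
        unfolding mv_def by (rule sum_blocks[OF bs])
      also have "\<dots> = (\<Sum>j\<le>N. mv (blockset n j) A x i)"
      proof (rule sum.mono_neutral_right)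
        show "{..N} \<subseteq> {..<K}" using N by auto
        show "\<forall>j\<in>{..<K} - {..N}. mv (blockset n j) A x i = 0"
        proof
          fix j assume "j \<in> {..<K} - {..N}"
          then have "N < j" "j < K" by auto
          then show "mv (blockset n j) A x i = 0" unfolding mv_def using up N i by (auto intro!: sum.neutral)
        qed
      qed auto
      finally show ?thesis .
    qed
    then have "L2_set (mv {..<n K} A x) (blockset n N) = L2_set (\<lambda>i. \<Sum>j\<le>N. mv (blockset n j) A x i) (blockset n N)"
      by (intro L2_set_cong) simp_all
    also have "\<dots> \<le> (\<Sum>j\<le>N. L2_set (mv (blockset n j) A x) (blockset n N))" by (intro L2_set_sum_le) auto
    also have "\<dots> \<le> (\<Sum>j\<le>N. f (N - j) * ?a j)"
    proof (rule sum_mono)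
      fix j assume "j \<in> {..N}"
      then have "bnd (blockset n j) (blockset n N) A (f (N - j))" using blk N by auto
      then show "L2_set (mv (blockset n j) A x) (blockset n N) \<le> f (N - j) * ?a j" by (simp add: bnd_def)
    qed
    finally show ?thesis .
  qed
  have fb: "finite (blockset n N)" for N by (simp add: blockset_def)
  have "(L2_set (mv {..<n K} A x) {..<n K})\<^sup>2 = (\<Sum>N<K. (L2_set (mv {..<n K} A x) (blockset n N))\<^sup>2)"
    unfolding L2_sq[OF finite_lessThan] L2_sq[OF fb] by (rule sum_blocks[OF bs])
  also have "\<dots> \<le> (\<Sum>N<K. (\<Sum>j\<le>N. f (N - j) * ?a j)\<^sup>2)"
  proof (rule sum_mono)
    fix N assume "N \<in> {..<K}"
    then show "(L2_set (mv {..<n K} A x) (blockset n N))\<^sup>2 \<le> (\<Sum>j\<le>N. f (N - j) * ?a j)\<^sup>2"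
      using rowN[of N] by (intro power_mono) auto
  qed
  also have "\<dots> \<le> (\<Sum>m<K. f m)\<^sup>2 * (\<Sum>j<K. (?a j)\<^sup>2)" by (rule conv_ineq[OF f0])
  also have "(\<Sum>j<K. (?a j)\<^sup>2) = (L2_set x {..<n K})\<^sup>2"
    unfolding L2_sq[OF finite_lessThan] L2_sq[OF fb] by (rule sum_blocks[OF bs, symmetric])
  finally have "(L2_set (mv {..<n K} A x) {..<n K})\<^sup>2 \<le> (\<Sum>m<K. f m)\<^sup>2 * (L2_set x {..<n K})\<^sup>2" .
  then have "(L2_set (mv {..<n K} A x) {..<n K})\<^sup>2 \<le> ((\<Sum>m<K. f m) * L2_set x {..<n K})\<^sup>2"
    by (simp only: power_mult_distrib)
  then show "L2_set (mv {..<n K} A x) {..<n K} \<le> (\<Sum>m<K. f m) * L2_set x {..<n K}"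
    by (rule power2_le_imp_le) (simp add: s0)
qed



definition blk :: "(nat \<Rightarrow> nat) \<Rightarrow> nat \<Rightarrow> nat" where
  "blk n i = (LEAST N. i < n (Suc N))"

definition rsupp :: "(nat \<Rightarrow> nat) \<Rightarrow> imat \<Rightarrow> bool" where
  "rsupp n A \<longleftrightarrow> (\<forall>i l. A i l \<noteq> 0 \<longrightarrow> l < n (Suc (blk n i)))"

lemma n_ge: "block_structure n \<Longrightarrow> N \<le> n N"
  unfolding block_structure_def using strict_mono_imp_increasing by blast

lemma blk_bounds:
  assumes bs: "block_structure n"
  shows "n (blk n i) \<le> i" "i < n (Suc (blk n i))"
proof -
  have ex: "\<exists>N. i < n (Suc N)" using n_ge[OF bs, of "Suc i"] by (intro exI[of _ i]) simp
  show "i < n (Suc (blk n i))" unfolding blk_def by (rule LeastI_ex[OF ex])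
  show "n (blk n i) \<le> i"
  proof (cases "blk n i")
    case 0 then show ?thesis using bs by (simp add: block_structure_def)
  next
    case (Suc M)
    have "\<not> i < n (Suc M)" using Suc unfolding blk_def by (metis lessI not_less_Least)
    then show ?thesis using Suc by simp
  qed
qed

lemma lt_n_iff: "block_structure n \<Longrightarrow> i < n N \<longleftrightarrow> blk n i < N"
proof
  assume bs: "block_structure n"
  { assume "i < n N"
    show "blk n i < N"
    proof (rule ccontr)
      assume "\<not> blk n i < N"
      then have "n N \<le> n (blk n i)" using bs_mono[OF bs] by simp
      then show False using blk_bounds[OF bs, of i] \<open>i < n N\<close> by simp
    qed }
  { assume "blk n i < N"
    then have "n (Suc (blk n i)) \<le> n N" using bs_mono[OF bs] by simp
    then show "i < n N" using blk_bounds[OF bs, of i] by simp }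
qed

lemma in_blockset_iff: "block_structure n \<Longrightarrow> i \<in> blockset n N \<longleftrightarrow> blk n i = N"
  unfolding blockset_def using lt_n_iff[of n i N] lt_n_iff[of n i "Suc N"] by auto

lemma ge_n_iff: "block_structure n \<Longrightarrow> n N \<le> i \<longleftrightarrow> N \<le> blk n i"
  using lt_n_iff[of n i N] by auto

lemma rsupp_blk: "block_structure n \<Longrightarrow> rsupp n A \<Longrightarrow> A i l \<noteq> 0 \<Longrightarrow> blk n l \<le> blk n i"
  unfolding rsupp_def using lt_n_iff[of n l "Suc (blk n i)"] by auto

lemma rsupp_zero: "rsupp n A \<Longrightarrow> n (Suc (blk n i)) \<le> l \<Longrightarrow> A i l = 0"
  unfolding rsupp_def using not_le by blast

lemma matvec_fin:
  assumes "rsupp n A"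
  shows "matvec A x i = (\<Sum>j<n (Suc (blk n i)). A i j * x j)"
  unfolding matvec_def using assms unfolding rsupp_def
  by (intro suminf_finite) auto

lemma summable_row:
  assumes "rsupp n A"
  shows "summable (\<lambda>j. A i j * x j)"
  using assms unfolding rsupp_def
  by (intro summable_finite[of "{..<n (Suc (blk n i))}"]) auto

lemma mat_mult_fin:
  assumes "rsupp n A"
  shows "mat_mult A B i k = (\<Sum>j<n (Suc (blk n i)). A i j * B j k)"
  unfolding mat_mult_def using assms unfolding rsupp_def
  by (intro suminf_finite) auto

lemma matvec_sec:
  assumes bs: "block_structure n" and A: "rsupp n A" and i: "i < n K"
  shows "matvec A x i = mv {..<n K} A x i"
proof -
  have "n (Suc (blk n i)) \<le> n K" using i lt_n_iff[OF bs] bs_mono[OF bs] by (simp add: Suc_le_eq)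
  then show ?thesis unfolding matvec_fin[OF A] mv_def
    using rsupp_zero[OF A] by (intro sum.mono_neutral_left) auto
qed

lemma sec_bounded:
  assumes bs: "block_structure n" and A: "rsupp n A" and sec: "\<And>K. bnd {..<n K} {..<n K} A c"
  shows "bounded_l2 A" "opnorm A \<le> c"
proof -
  have c0: "0 \<le> c" using sec[of 0] by (simp add: bnd_def)
  have main: "in_l2 (matvec A x) \<and> l2norm (matvec A x) \<le> c * l2norm x" if x: "in_l2 x" for x
  proof -
    let ?S = "\<Sum>i. (x i)\<^sup>2"
    have sx: "summable (\<lambda>i. (x i)\<^sup>2)" using x by (simp add: in_l2_def)
    have part: "(\<Sum>i<m. (matvec A x i)\<^sup>2) \<le> c\<^sup>2 * ?S" for m
    proof -
      have "(\<Sum>i<m. (matvec A x i)\<^sup>2) \<le> (\<Sum>i<n m. (matvec A x i)\<^sup>2)"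
        using n_ge[OF bs, of m] by (intro sum_mono2) auto
      also have "\<dots> = (L2_set (mv {..<n m} A x) {..<n m})\<^sup>2"
        by (simp add: L2_sq matvec_sec[OF bs A])
      also have "\<dots> \<le> (c * L2_set x {..<n m})\<^sup>2"
        using sec[of m] by (intro power_mono) (auto simp: bnd_def)
      also have "\<dots> = c\<^sup>2 * (\<Sum>i<n m. (x i)\<^sup>2)" by (simp add: power_mult_distrib L2_sq)
      also have "\<dots> \<le> c\<^sup>2 * ?S"
        using sx by (intro mult_left_mono sum_le_suminf) auto
      finally show ?thesis .
    qed
    have sm: "summable (\<lambda>i. (matvec A x i)\<^sup>2)"
    proof (rule bounded_imp_summable[of _ "c\<^sup>2 * ?S"])
      fix m show "(\<Sum>k\<le>m. (matvec A x k)\<^sup>2) \<le> c\<^sup>2 * ?S"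
        using part[of "Suc m"] unfolding lessThan_Suc_atMost .
    qed simp
    have le: "(\<Sum>i. (matvec A x i)\<^sup>2) \<le> c\<^sup>2 * ?S" by (rule suminf_le_const[OF sm part])
    have "l2norm (matvec A x) \<le> sqrt (c\<^sup>2 * ?S)" unfolding l2norm_def using le by simp
    also have "\<dots> = c * l2norm x" using c0 by (simp add: l2norm_def real_sqrt_mult)
    finally show ?thesis using sm by (simp add: in_l2_def)
  qed
  show "bounded_l2 A"
    unfolding bounded_l2_def using main summable_row[OF A] by blast
  show "opnorm A \<le> c"
    unfolding opnorm_def
  proof (rule cSup_least)
    have "in_l2 (\<lambda>_. 0)" by (simp add: in_l2_def)
    moreover have "l2norm (\<lambda>_. 0) \<le> 1" by (simp add: l2norm_def)
    ultimately show "{l2norm (matvec A x) |x. in_l2 x \<and> l2norm x \<le> 1} \<noteq> {}" by blast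
  next
    fix v assume "v \<in> {l2norm (matvec A x) |x. in_l2 x \<and> l2norm x \<le> 1}"
    then obtain x where x: "in_l2 x" "l2norm x \<le> 1" "v = l2norm (matvec A x)" by blast
    then have "v \<le> c * l2norm x" using main by blast
    also have "\<dots> \<le> c" using x c0 by (simp add: mult_left_le)
    finally show "v \<le> c" .
  qed
qed

lemma matvec_inverse:
  assumes bs: "block_structure n" and A: "rsupp n A" and B: "rsupp n B"
    and AB: "\<And>i t. t < n (Suc (blk n i)) \<Longrightarrow> (\<Sum>l<n (Suc (blk n i)). A i l * B l t) = id_mat i t"
  shows "matvec A (matvec B x) = x"
proof
  fix i
  let ?r = "\<lambda>i. n (Suc (blk n i))"
  have "matvec A (matvec B x) i = (\<Sum>l<?r i. A i l * (\<Sum>t<?r l. B l t * x t))"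
    by (simp add: matvec_fin[OF A] matvec_fin[OF B])
  also have "\<dots> = (\<Sum>l<?r i. A i l * (\<Sum>t<?r i. B l t * x t))"
  proof (rule sum.cong[OF refl])
    fix l assume "l \<in> {..<?r i}"
    show "A i l * (\<Sum>t<?r l. B l t * x t) = A i l * (\<Sum>t<?r i. B l t * x t)"
    proof (cases "A i l = 0")
      case False
      then have "blk n l \<le> blk n i" by (rule rsupp_blk[OF bs A])
      then have "?r l \<le> ?r i" using bs_mono[OF bs] by simp
      then have "(\<Sum>t<?r l. B l t * x t) = (\<Sum>t<?r i. B l t * x t)"
        using rsupp_zero[OF B] by (intro sum.mono_neutral_left) auto
      then show ?thesis by simp
    qed simp
  qed
  also have "\<dots> = (\<Sum>t<?r i. (\<Sum>l<?r i. A i l * B l t) * x t)"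
  proof -
    have "(\<Sum>l<?r i. A i l * (\<Sum>t<?r i. B l t * x t)) = (\<Sum>l<?r i. \<Sum>t<?r i. A i l * B l t * x t)"
      by (simp add: sum_distrib_left mult.assoc)
    also have "\<dots> = (\<Sum>t<?r i. \<Sum>l<?r i. A i l * B l t * x t)" by (rule sum.swap)
    also have "\<dots> = (\<Sum>t<?r i. (\<Sum>l<?r i. A i l * B l t) * x t)" by (simp add: sum_distrib_right)
    finally show ?thesis .
  qed
  also have "\<dots> = (\<Sum>t<?r i. id_mat i t * x t)" using AB by simp
  also have "\<dots> = (\<Sum>t<?r i. if t = i then x t else 0)"
    by (intro sum.cong) (auto simp: id_mat_def)
  also have "\<dots> = x i" using blk_bounds(2)[OF bs, of i] by simp
  finally show "matvec A (matvec B x) i = x i" .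
qed



lemma lower_blk:
  assumes bs: "block_structure n" and A: "block_lower n A" and nz: "A k l \<noteq> 0"
  shows "blk n l \<le> blk n k"
proof (rule ccontr)
  assume "\<not> blk n l \<le> blk n k"
  then have "block_zero n A (blk n k) (blk n l)" using A by (simp add: block_lower_def)
  then have "A k l = 0" unfolding block_zero_def using in_blockset_iff[OF bs] by blast
  then show False using nz by simp
qed

lemma upper_blk:
  assumes bs: "block_structure n" and A: "block_upper n A" and nz: "A k l \<noteq> 0"
  shows "blk n k \<le> blk n l"
proof (rule ccontr)
  assume "\<not> blk n k \<le> blk n l"
  then have "block_zero n A (blk n k) (blk n l)" using A by (simp add: block_upper_def)
  then have "A k l = 0" unfolding block_zero_def using in_blockset_iff[OF bs] by blast
  then show False using nz by simp
qed

lemma lower_rsupp: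
  assumes bs: "block_structure n" and A: "block_lower n A"
  shows "rsupp n A"
  unfolding rsupp_def using lower_blk[OF bs A] lt_n_iff[OF bs] by (simp add: less_Suc_eq_le)

lemma prod_assoc:
  assumes bs: "block_structure n" and A: "rsupp n A" and B: "rsupp n B"
  shows "(\<Sum>t<n (Suc (blk n i)). A i t * (\<Sum>s<n (Suc (blk n t)). B t s * C s l))
       = (\<Sum>s<n (Suc (blk n i)). (\<Sum>t<n (Suc (blk n i)). A i t * B t s) * C s l)"
proof -
  let ?r = "\<lambda>i. n (Suc (blk n i))"
  have "(\<Sum>t<?r i. A i t * (\<Sum>s<?r t. B t s * C s l)) = (\<Sum>t<?r i. A i t * (\<Sum>s<?r i. B t s * C s l))"
  proof (rule sum.cong[OF refl])
    fix t assume "t \<in> {..<?r i}"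
    show "A i t * (\<Sum>s<?r t. B t s * C s l) = A i t * (\<Sum>s<?r i. B t s * C s l)"
    proof (cases "A i t = 0")
      case False
      then have "blk n t \<le> blk n i" by (rule rsupp_blk[OF bs A])
      then have "?r t \<le> ?r i" using bs_mono[OF bs] by simp
      then have "(\<Sum>s<?r t. B t s * C s l) = (\<Sum>s<?r i. B t s * C s l)"
        using rsupp_zero[OF B] by (intro sum.mono_neutral_left) auto
      then show ?thesis by simp
    qed simp
  qed
  also have "\<dots> = (\<Sum>t<?r i. \<Sum>s<?r i. A i t * B t s * C s l)"
    by (simp add: sum_distrib_left mult.assoc)
  also have "\<dots> = (\<Sum>s<?r i. \<Sum>t<?r i. A i t * B t s * C s l)" by (rule sum.swap)
  also have "\<dots> = (\<Sum>s<?r i. (\<Sum>t<?r i. A i t * B t s) * C s l)" by (simp add: sum_distrib_right)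
  finally show ?thesis .
qed

lemma id_sum: "i < r \<Longrightarrow> (\<Sum>t<r. id_mat i t * g t) = g i"
proof -
  assume "i < r"
  have "(\<Sum>t<r. id_mat i t * g t) = (\<Sum>t<r. if t = i then g t else 0)"
    by (intro sum.cong) (auto simp: id_mat_def)
  then show ?thesis using \<open>i < r\<close> by simp
qed

definition xr :: "nat set \<Rightarrow> iseq \<Rightarrow> iseq" where
  "xr S x = (\<lambda>j. if j \<in> S then x j else 0)"

lemma xr_l2: "finite S \<Longrightarrow> in_l2 (xr S x)"
  unfolding in_l2_def xr_def by (intro summable_finite[of S]) auto

lemma xr_norm: "finite S \<Longrightarrow> l2norm (xr S x) = L2_set x S"
proof -
  assume S: "finite S"
  have "(\<Sum>i. (xr S x i)\<^sup>2) = (\<Sum>i\<in>S. (xr S x i)\<^sup>2)" using S by (intro suminf_finite) (auto simp: xr_def)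
  also have "\<dots> = (\<Sum>i\<in>S. (x i)\<^sup>2)" by (simp add: xr_def)
  finally show ?thesis by (simp add: l2norm_def L2_set_def)
qed

lemma xr_matvec: "finite S \<Longrightarrow> matvec A (xr S x) i = mv S A x i"
proof -
  assume S: "finite S"
  have "matvec A (xr S x) i = (\<Sum>j\<in>S. A i j * xr S x j)" unfolding matvec_def
    using S by (intro suminf_finite) (auto simp: xr_def)
  then show ?thesis by (simp add: mv_def xr_def)
qed

locale LU =
  fixes M L U Linv :: imat and n :: "nat \<Rightarrow> nat" and d :: "nat \<Rightarrow> nat \<Rightarrow> real" and b0 :: nat
  assumes bM: "bounded_l2 M" and eM: "elliptic M" and bs: "block_structure n"
    and bandM: "block_banded n b0 M" and met: "nat_metric d" and inBM: "in_B d b0 M"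
    and Llow: "block_lower n L" and Lid: "\<forall>i. block_identity n L i" and Uup: "block_upper n U"
    and MLU: "M = mat_mult L U" and Linvlow: "block_lower n Linv"
    and LLinv: "mat_mult L Linv = id_mat" and LinvL: "mat_mult Linv L = id_mat"
    and b0pos: "1 \<le> b0"
begin

abbreviation "r i \<equiv> n (Suc (blk n i))"

lemma rL: "rsupp n L" by (rule lower_rsupp[OF bs Llow])
lemma rLinv: "rsupp n Linv" by (rule lower_rsupp[OF bs Linvlow])

lemma L_diag:
  assumes "blk n l = blk n k"
  shows "L k l = id_mat k l"
proof -
  have "k \<in> blockset n (blk n k)" "l \<in> blockset n (blk n k)" using assms in_blockset_iff[OF bs] by auto
  then show ?thesis using Lid unfolding block_identity_def id_mat_def by blast
qed

lemma Linv_diag: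
  assumes kl: "blk n l = blk n k"
  shows "Linv k l = id_mat k l"
proof -
  have "id_mat k l = (\<Sum>t<r k. L k t * Linv t l)"
    using mat_mult_fin[OF rL, of L k] LLinv by (metis mat_mult_fin[OF rL])
  also have "\<dots> = (\<Sum>t<r k. id_mat k t * Linv t l)"
  proof (rule sum.cong[OF refl])
    fix t assume t: "t \<in> {..<r k}"
    show "L k t * Linv t l = id_mat k t * Linv t l"
    proof (cases "Linv t l = 0")
      case False
      then have "blk n l \<le> blk n t" by (rule lower_blk[OF bs Linvlow])
      moreover have "blk n t \<le> blk n k" using t lt_n_iff[OF bs] by (simp add: less_Suc_eq_le)
      ultimately have "blk n t = blk n k" using kl by simp
      then show ?thesis using L_diag by simp
    qed simp
  qed
  also have "\<dots> = Linv k l" using blk_bounds(2)[OF bs] by (rule id_sum)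
  finally show ?thesis by simp
qed

lemma M_eq: "M i l = (\<Sum>s<r i. L i s * U s l)"
  using MLU mat_mult_fin[OF rL] by simp

lemma U_eq: "U i l = (\<Sum>t<r i. Linv i t * M t l)"
proof -
  have "(\<Sum>t<r i. Linv i t * M t l) = (\<Sum>t<r i. Linv i t * (\<Sum>s<r t. L t s * U s l))"
    by (simp add: M_eq)
  also have "\<dots> = (\<Sum>s<r i. (\<Sum>t<r i. Linv i t * L t s) * U s l)" by (rule prod_assoc[OF bs rLinv rL])
  also have "\<dots> = (\<Sum>s<r i. id_mat i s * U s l)"
    using LinvL mat_mult_fin[OF rLinv] by metis
  also have "\<dots> = U i l" using blk_bounds(2)[OF bs] by (rule id_sum)
  finally show ?thesis by simp
qed

lemma M_blk: "M k l \<noteq> 0 \<Longrightarrow> dist (real (blk n k)) (real (blk n l)) \<le> b0"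
proof (rule ccontr)
  assume nz: "M k l \<noteq> 0" and "\<not> dist (real (blk n k)) (real (blk n l)) \<le> b0"
  then have "block_zero n M (blk n k) (blk n l)" using bandM by (simp add: block_banded_def)
  then have "M k l = 0" unfolding block_zero_def using in_blockset_iff[OF bs] by blast
  then show False using nz by simp
qed

lemma M_d: "M k l \<noteq> 0 \<Longrightarrow> d k l \<le> b0"
  using inBM unfolding in_B_def by (meson not_less)

definition Cc :: real where
  "Cc = (SOME C. 0 < C \<and> (\<forall>x. in_l2 x \<longrightarrow> (\<Sum>i. matvec M x i * x i) \<ge> C * (l2norm x)\<^sup>2))"

lemma Cc: "0 < Cc" "in_l2 x \<Longrightarrow> (\<Sum>i. matvec M x i * x i) \<ge> Cc * (l2norm x)\<^sup>2"
proof -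
  have ex: "\<exists>C. 0 < C \<and> (\<forall>x. in_l2 x \<longrightarrow> (\<Sum>i. matvec M x i * x i) \<ge> C * (l2norm x)\<^sup>2)"
    using eM by (simp add: elliptic_def)
  show "0 < Cc" using someI_ex[OF ex] by (simp add: Cc_def)
  show "in_l2 x \<Longrightarrow> (\<Sum>i. matvec M x i * x i) \<ge> Cc * (l2norm x)\<^sup>2" using someI_ex[OF ex] by (simp add: Cc_def)
qed

definition B0c :: real where
  "B0c = (SOME C. \<forall>x. in_l2 x \<longrightarrow>
      (\<forall>i. summable (\<lambda>j. M i j * x j)) \<and> in_l2 (matvec M x) \<and> l2norm (matvec M x) \<le> C * l2norm x)"

lemma B0c: "in_l2 x \<Longrightarrow> in_l2 (matvec M x) \<and> l2norm (matvec M x) \<le> B0c * l2norm x"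
proof -
  have ex: "\<exists>C. \<forall>x. in_l2 x \<longrightarrow>
      (\<forall>i. summable (\<lambda>j. M i j * x j)) \<and> in_l2 (matvec M x) \<and> l2norm (matvec M x) \<le> C * l2norm x"
    using bM by (simp add: bounded_l2_def)
  show "in_l2 x \<Longrightarrow> in_l2 (matvec M x) \<and> l2norm (matvec M x) \<le> B0c * l2norm x"
    unfolding B0c_def using someI_ex[OF ex] by blast
qed

definition Bc :: real where "Bc = max B0c Cc"

lemma Bc: "0 < Bc" "Cc \<le> Bc" "B0c \<le> Bc"
  using Cc(1) by (auto simp: Bc_def)

lemma M_bnd:
  assumes S: "finite S" and T: "finite T"
  shows "bnd S T M Bc"
  unfolding bnd_def
proof (intro conjI allI)
  show "0 \<le> Bc" using Bc by simp
  fix x :: iseq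
  have l2: "in_l2 (xr S x)" by (rule xr_l2[OF S])
  have mv: "matvec M (xr S x) = mv S M x" using xr_matvec[OF S] by auto
  have sm: "summable (\<lambda>i. (mv S M x i)\<^sup>2)" using B0c[OF l2] mv by (simp add: in_l2_def)
  have "L2_set (mv S M x) T = sqrt (\<Sum>i\<in>T. (mv S M x i)\<^sup>2)" by (simp add: L2_set_def)
  also have "\<dots> \<le> sqrt (\<Sum>i. (mv S M x i)\<^sup>2)" using sm T by (intro real_sqrt_le_mono sum_le_suminf) auto
  also have "\<dots> = l2norm (matvec M (xr S x))" by (simp add: l2norm_def mv)
  also have "\<dots> \<le> B0c * l2norm (xr S x)" using B0c[OF l2] by simp
  also have "\<dots> \<le> Bc * L2_set x S" using Bc xr_norm[OF S] by (simp add: mult_right_mono)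
  finally show "L2_set (mv S M x) T \<le> Bc * L2_set x S" .
qed

lemma M_ell:
  assumes S: "finite S"
  shows "ell S M Cc"
  unfolding ell_def
proof
  fix x :: iseq
  have l2: "in_l2 (xr S x)" by (rule xr_l2[OF S])
  have "(\<Sum>i. matvec M (xr S x) i * xr S x i) = (\<Sum>i\<in>S. matvec M (xr S x) i * xr S x i)"
    using S by (intro suminf_finite) (auto simp: xr_def)
  also have "\<dots> = qf S M x" unfolding qf_def xr_matvec[OF S]
    by (intro sum.cong refl) (simp add: xr_def mult.commute)
  finally show "Cc * (L2_set x S)\<^sup>2 \<le> qf S M x" using Cc(2)[OF l2] xr_norm[OF S] by simp
qed

lemma MT_ell:
  assumes S: "finite S"
  shows "ell S (\<lambda>i j. M j i) Cc"
proof -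
  have "qf S (\<lambda>i j. M j i) x = qf S M x" for x
  proof -
    have "qf S (\<lambda>i j. M j i) x = (\<Sum>i\<in>S. \<Sum>j\<in>S. x i * M j i * x j)"
      by (simp add: qf_def mv_def sum_distrib_left mult.assoc)
    also have "\<dots> = (\<Sum>j\<in>S. \<Sum>i\<in>S. x i * M j i * x j)" by (rule sum.swap)
    also have "\<dots> = qf S M x" by (simp add: qf_def mv_def sum_distrib_left mult_ac)
    finally show ?thesis .
  qed
  then show ?thesis using M_ell[OF S] by (simp add: ell_def)
qed

end


lemma L2_set_neg: "L2_set (\<lambda>l. - f l) A = L2_set f A"
  by (simp add: L2_set_def)

lemma group_div_sum:
  fixes g :: "nat \<Rightarrow> real"
  assumes g0: "\<And>t. 0 \<le> g t" and b: "1 \<le> b"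
  shows "(\<Sum>m<K. g (m div b)) \<le> b * (\<Sum>t<K. g t)"
proof -
  have "(\<Sum>m<K. g (m div b)) \<le> (\<Sum>m<K * b. g (m div b))"
    using b g0 by (intro sum_mono2) auto
  also have "\<dots> = (\<Sum>t<K. \<Sum>m\<in>{t * b..<t * b + b}. g (m div b))"
    by (rule sum.nat_group[symmetric])
  also have "\<dots> = (\<Sum>t<K. \<Sum>m\<in>{t * b..<t * b + b}. g t)"
  proof (intro sum.cong refl)
    fix t m assume "m \<in> {t * b..<t * b + b}"
    then have "m div b = t" using b by (auto intro: div_nat_eqI simp: mult.commute)
    then show "g (m div b) = g t" by simp
  qed
  also have "\<dots> = b * (\<Sum>t<K. g t)" by (simp add: sum_distrib_left)
  finally show ?thesis .
qed

lemma shift0_sum: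
  fixes f h :: "nat \<Rightarrow> real"
  assumes "\<And>m. f (Suc m) = h m" "\<And>m. 0 \<le> h m" "0 \<le> f 0"
  shows "(\<Sum>m<K. f m) \<le> f 0 + (\<Sum>m<K. h m)"
proof (cases K)
  case 0 then show ?thesis using assms by simp
next
  case (Suc K')
  have "(\<Sum>m<K. f m) = f 0 + (\<Sum>m<K'. h m)" unfolding Suc sum.lessThan_Suc_shift using assms(1) by simp
  also have "\<dots> \<le> f 0 + (\<Sum>m<K. h m)" using Suc assms(2) by (intro add_left_mono sum_mono2) auto
  finally show ?thesis .
qed

lemma geom_le:
  fixes q :: real
  assumes "0 \<le> q" "q < 1"
  shows "(\<Sum>t<K. q ^ t) \<le> 1 / (1 - q)"
proof -
  have "(\<Sum>t<K. q ^ t) = (1 - q ^ K) / (1 - q)" using assms by (simp add: sum_gp_strict)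
  also have "\<dots> \<le> 1 / (1 - q)" using assms by (intro divide_right_mono) auto
  finally show ?thesis .
qed

context LU begin

abbreviation "Sc N \<equiv> {..<n N}"
abbreviation "Bk N \<equiv> blockset n N"

lemma fin_Bk: "finite (Bk N)" by (simp add: blockset_def)

lemma Sc_Bk: "Sc (Suc N) = Sc N \<union> Bk N" "Sc N \<inter> Bk N = {}"
  using bs_mono[OF bs, of N "Suc N"] by (auto simp: blockset_def)

lemma in_Bk: "i \<in> Bk N \<longleftrightarrow> blk n i = N" by (rule in_blockset_iff[OF bs])
lemma in_Sc: "i \<in> Sc N \<longleftrightarrow> blk n i < N" using lt_n_iff[OF bs] by simp

lemma W_eq:
  assumes i: "i \<in> Bk N" and l: "l \<in> Sc N"
  shows "(\<Sum>t\<in>Sc N. Linv i t * M t l) = - M i l"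
proof -
  have bi: "blk n i = N" using i in_Bk by simp
  have "U i l = 0" using upper_blk[OF bs Uup, of i l] l bi in_Sc by fastforce
  then have "0 = (\<Sum>t<r i. Linv i t * M t l)" using U_eq by simp
  also have "\<dots> = (\<Sum>t\<in>Sc N. Linv i t * M t l) + (\<Sum>t\<in>Bk N. Linv i t * M t l)"
    using bi Sc_Bk by (simp add: sum.union_disjoint fin_Bk)
  also have "(\<Sum>t\<in>Bk N. Linv i t * M t l) = (\<Sum>t\<in>Bk N. if t = i then M t l else 0)"
    using Linv_diag bi in_Bk by (intro sum.cong refl) (auto simp: id_mat_def)
  also have "\<dots> = M i l" using i fin_Bk by simp
  finally show ?thesis by linarith
qed

lemma W_bnd: "bnd (Sc N) (Bk N) Linv (Bc / Cc)"
proof -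
  let ?LT = "\<lambda>a b. Linv b a" and ?MT = "\<lambda>a b. M b a"
  have "bnd (Bk N) (Sc N) ?LT (Bc / Cc)"
    unfolding bnd_def
  proof (intro conjI allI)
    show "0 \<le> Bc / Cc" using Bc Cc by simp
    fix z :: iseq
    define y where "y = mv (Bk N) ?LT z"
    have eq: "mv (Sc N) ?MT y l = - mv (Bk N) ?MT z l" if l: "l \<in> Sc N" for l
    proof -
      have "mv (Sc N) ?MT y l = (\<Sum>t\<in>Sc N. \<Sum>i\<in>Bk N. M t l * Linv i t * z i)"
        by (simp add: mv_def y_def sum_distrib_left mult.assoc)
      also have "\<dots> = (\<Sum>i\<in>Bk N. \<Sum>t\<in>Sc N. M t l * Linv i t * z i)" by (rule sum.swap)
      also have "\<dots> = (\<Sum>i\<in>Bk N. (\<Sum>t\<in>Sc N. Linv i t * M t l) * z i)"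
        by (simp add: sum_distrib_left sum_distrib_right mult_ac)
      also have "\<dots> = (\<Sum>i\<in>Bk N. - M i l * z i)" using W_eq l by (intro sum.cong refl) simp
      also have "\<dots> = - mv (Bk N) ?MT z l" by (simp add: mv_def sum_negf)
      finally show ?thesis .
    qed
    have "Cc * L2_set y (Sc N) \<le> L2_set (mv (Sc N) ?MT y) (Sc N)"
      by (rule ell_lower[OF finite_lessThan Cc(1) MT_ell[OF finite_lessThan]])
    also have "\<dots> = L2_set (\<lambda>l. - mv (Bk N) ?MT z l) (Sc N)" using eq by (intro L2_set_cong) auto
    also have "\<dots> = L2_set (mv (Bk N) ?MT z) (Sc N)" by (rule L2_set_neg)
    also have "\<dots> \<le> Bc * L2_set z (Bk N)"
      using bnd_transpose[OF finite_lessThan fin_Bk M_bnd[OF finite_lessThan fin_Bk]] by (simp add: bnd_def)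
    finally have "Cc * L2_set y (Sc N) \<le> Bc * L2_set z (Bk N)" .
    then show "L2_set y (Sc N) \<le> Bc / Cc * L2_set z (Bk N)" using Cc(1) by (simp add: field_simps)
  qed
  from bnd_transpose[OF fin_Bk finite_lessThan this] show ?thesis by simp
qed

definition om :: real where "om = Cc / Bc\<^sup>2"
definition Rm :: imat where "Rm = (\<lambda>a b. id_mat a b - om * M a b)"
definition qq :: real where "qq = sqrt (1 - Cc\<^sup>2 / Bc\<^sup>2)"

lemma qq: "0 \<le> qq" "qq < 1"
proof -
  have "Cc\<^sup>2 \<le> Bc\<^sup>2" using Bc Cc by (intro power_mono) auto
  then have "Cc\<^sup>2 / Bc\<^sup>2 \<le> 1" using Bc by (simp add: divide_le_eq)
  then show "0 \<le> qq" by (simp add: qq_def)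
  have "0 < Cc\<^sup>2 / Bc\<^sup>2" using Bc Cc by simp
  then show "qq < 1" by (simp add: qq_def)
qed

lemma R_bnd: "finite S \<Longrightarrow> bnd S S Rm qq"
  unfolding Rm_def om_def qq_def using contraction[OF _ Cc(1) Bc(2) M_bnd M_ell] by simp

lemma pw_bnd: "finite S \<Longrightarrow> bnd S S (pw S Rm s) (qq ^ s)"
  by (rule bnd_pw[OF _ R_bnd])

definition bd :: "nat \<Rightarrow> nat \<Rightarrow> real" where "bd a b = dist (real (blk n a)) (real (blk n b))"

lemma bd_refl: "bd a a = 0" by (simp add: bd_def)
lemma bd_tri: "bd a c \<le> bd a b + bd b c" unfolding bd_def by (rule dist_triangle)

lemma d_refl: "d a a = 0" using met unfolding nat_metric_def by blast
lemma d_tri: "d a c \<le> d a b + d b c" using met unfolding nat_metric_def by blast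

lemma R_nz: "Rm a b \<noteq> 0 \<Longrightarrow> bd a b \<le> b0 \<and> d a b \<le> b0"
proof -
  assume nz: "Rm a b \<noteq> 0"
  show ?thesis
  proof (cases "a = b")
    case True then show ?thesis by (simp add: bd_refl d_refl)
  next
    case False
    then have "M a b \<noteq> 0" using nz by (simp add: Rm_def id_mat_def)
    then show ?thesis using M_blk M_d by (simp add: bd_def)
  qed
qed

lemma poly_bd: "polyR S Rm om k i j \<noteq> 0 \<Longrightarrow> bd i j \<le> real (k - 1) * b0"
  by (rule polyR_sparse[where dl=bd, OF bd_refl bd_tri]) (use R_nz in auto)

lemma pw_bd: "pw S Rm m i j \<noteq> 0 \<Longrightarrow> bd i j \<le> real m * b0"
  by (rule pw_sparse[where dl=bd, OF bd_refl bd_tri]) (use R_nz in auto)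

lemma mmLinvM: "i \<in> Bk N \<Longrightarrow> t \<in> Sc N \<Longrightarrow> mm (Sc N) Linv M i t = - M i t"
  unfolding mm_def by (rule W_eq)

lemma W_decomp:
  assumes i: "i \<in> Bk N" and l: "l \<in> Sc N"
  shows "Linv i l = mm (Sc N) Linv (pw (Sc N) Rm s) i l - mm (Sc N) M (polyR (Sc N) Rm om s) i l"
proof -
  let ?S = "Sc N" and ?P = "polyR (Sc N) Rm om s"
  have "mm ?S Linv (pw ?S Rm s) i l = (\<Sum>t\<in>?S. Linv i t * (id_mat t l - mm ?S M ?P t l))"
    unfolding mm_def[of ?S Linv] using poly_identity[of ?S Rm om M] by (intro sum.cong refl) (auto simp: Rm_def)
  also have "\<dots> = mm ?S Linv id_mat i l - mm ?S Linv (mm ?S M ?P) i l"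
    by (simp add: mm_def right_diff_distrib sum_subtractf)
  also have "mm ?S Linv id_mat i l = Linv i l" using l by (simp add: mm_id_right)
  also have "mm ?S Linv (mm ?S M ?P) i l = mm ?S (mm ?S Linv M) ?P i l" by (simp add: mm_assoc)
  also have "\<dots> = - mm ?S M ?P i l"
    unfolding mm_def[of ?S "mm ?S Linv M"] using mmLinvM[OF i]
    by (simp add: mm_def[of ?S M] sum_negf)
  finally show ?thesis by simp
qed

lemma poly_far_zero:
  assumes i: "i \<in> Bk N" and lj: "blk n l = j" and far: "s * b0 + j < N"
  shows "mm (Sc N) M (polyR (Sc N) Rm om s) i l = 0"
proof (cases "s = 0")
  case True then show ?thesis by (simp add: mm_def polyR_def)
next
  case False
  show ?thesis unfolding mm_def
  proof (rule sum.neutral, rule ballI, rule ccontr)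
    fix t assume "M i t * polyR (Sc N) Rm om s t l \<noteq> 0"
    then have "M i t \<noteq> 0" "polyR (Sc N) Rm om s t l \<noteq> 0" by auto
    then have "bd i t \<le> b0" "bd t l \<le> real (s - 1) * b0" using M_blk poly_bd by (auto simp: bd_def)
    then have "bd i l \<le> b0 + real (s - 1) * b0" using bd_tri[where a=i and b=t and c=l] by linarith
    moreover have "real (s - 1) = real s - 1" using False by simp
    ultimately have "bd i l \<le> real s * b0" by (simp add: algebra_simps)
    moreover have "blk n i = N" using i in_Bk by simp
    ultimately have "real N - real j \<le> real s * b0" using lj by (simp add: bd_def dist_real_def)
    moreover have "real (s * b0 + j) < real N" using far by linarith
    ultimately show False by simp
  qed
qed

lemma Linv_far:
  assumes F: "F \<subseteq> Sc N" and far: "\<And>t. t \<in> F \<Longrightarrow> s * b0 + blk n t < N"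
  shows "bnd F (Bk N) Linv ((Bc / Cc) * qq ^ s)"
proof -
  have "bnd F (Sc N) (pw (Sc N) Rm s) (qq ^ s)"
    using bnd_sub[OF pw_bnd[OF finite_lessThan] finite_lessThan finite_lessThan F] by simp
  from bnd_comp[OF finite_lessThan this W_bnd]
  have "bnd F (Bk N) (mm (Sc N) Linv (pw (Sc N) Rm s)) ((Bc / Cc) * qq ^ s)" .
  then show ?thesis
  proof (rule bnd_cong)
    fix i l assume "i \<in> Bk N" "l \<in> F"
    then show "mm (Sc N) Linv (pw (Sc N) Rm s) i l = Linv i l"
      using W_decomp[of i N l s] poly_far_zero[of i N l "blk n l" s] far F by auto
  qed
qed

definition fW :: "nat \<Rightarrow> real" where
  "fW m = (if m = 0 then 1 else (Bc / Cc) * qq ^ ((m - 1) div b0))"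

lemma fW0: "0 \<le> fW m" using Bc Cc qq by (simp add: fW_def)

lemma Linv_blk:
  assumes "j \<le> N"
  shows "bnd (Bk j) (Bk N) Linv (fW (N - j))"
proof (cases "j = N")
  case True
  have "bnd (Bk N) (Bk N) id_mat 1" by (rule bnd_id[OF fin_Bk])
  then have "bnd (Bk N) (Bk N) Linv 1"
    by (rule bnd_cong) (use Linv_diag in_Bk in auto)
  then show ?thesis using True by (simp add: fW_def)
next
  case False
  then have jN: "j < N" using assms by simp
  let ?s = "(N - j - 1) div b0"
  have sb: "?s * b0 \<le> N - j - 1" by (simp add: div_times_less_eq_dividend)
  have sj: "?s * b0 + j < N" using sb jN by linarith
  have far: "?s * b0 + blk n t < N" if "t \<in> Bk j" for t
  proof -
    have "blk n t = j" using that in_Bk by simp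
    then show ?thesis using sj by simp
  qed
  have "Bk j \<subseteq> Sc N" using jN in_Bk in_Sc by auto
  from Linv_far[OF this far] show ?thesis using jN by (simp add: fW_def)
qed

definition LamW :: real where "LamW = 1 + (Bc / Cc) * (b0 * (1 / (1 - qq)))"

lemma sum_fW: "(\<Sum>m<K. fW m) \<le> LamW"
proof -
  have "(\<Sum>m<K. fW m) \<le> fW 0 + (\<Sum>m<K. (Bc / Cc) * qq ^ (m div b0))"
    by (rule shift0_sum) (use Bc Cc qq fW0 in \<open>auto simp: fW_def\<close>)
  also have "(\<Sum>m<K. (Bc / Cc) * qq ^ (m div b0)) = (Bc / Cc) * (\<Sum>m<K. qq ^ (m div b0))"
    by (simp add: sum_distrib_left)
  also have "\<dots> \<le> (Bc / Cc) * (b0 * (\<Sum>t<K. qq ^ t))"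
    using Bc Cc qq b0pos by (intro mult_left_mono group_div_sum) auto
  also have "\<dots> \<le> (Bc / Cc) * (b0 * (1 / (1 - qq)))"
    using Bc Cc qq by (intro mult_left_mono geom_le) auto
  finally show ?thesis by (simp add: LamW_def fW_def)
qed

lemma Linv_sec: "bnd (Sc K) (Sc K) Linv LamW"
proof -
  have "bnd (Sc K) (Sc K) Linv (\<Sum>m<K. fW m)"
  proof (rule conv_bnd[OF bs fW0])
    fix N j assume "N < K" "j \<le> N"
    then show "bnd (Bk j) (Bk N) Linv (fW (N - j))" by (simp add: Linv_blk)
  next
    fix N j i l assume "N < j" "i \<in> Bk N" "l \<in> Bk j"
    then show "Linv i l = 0" using lower_blk[OF bs Linvlow, of i l] in_Bk by fastforce
  qed
  then show ?thesis using sum_fW by (rule bnd_mono)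
qed

end


lemma shifted_geom:
  fixes q :: real
  assumes q: "0 \<le> q" "q < 1"
  shows "(\<Sum>t<K. q ^ (t - k)) \<le> k + 1 / (1 - q)"
proof -
  have "(\<Sum>t<K. q ^ (t - k)) \<le> (\<Sum>t<k + K. q ^ (t - k))"
    using q by (intro sum_mono2) auto
  also have "\<dots> = (\<Sum>t\<in>{0..<k}. q ^ (t - k)) + (\<Sum>t\<in>{k..<k + K}. q ^ (t - k))"
    unfolding atLeast0LessThan[symmetric] by (rule sum.atLeastLessThan_concat[symmetric]) auto
  also have "(\<Sum>t\<in>{0..<k}. q ^ (t - k)) = (\<Sum>t\<in>{0..<k}. 1)" by (intro sum.cong) auto
  also have "\<dots> = k" by simp
  also have "(\<Sum>t\<in>{k..<k + K}. q ^ (t - k)) = (\<Sum>u\<in>{0..<K}. q ^ u)"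
    using sum.shift_bounds_nat_ivl[of "\<lambda>t. q ^ (t - k)" 0 k K] by (simp add: add.commute)
  also have "\<dots> \<le> 1 / (1 - q)" using geom_le[OF q] by (simp add: atLeast0LessThan)
  finally show ?thesis by simp
qed

context LU begin

definition LeI :: "nat \<Rightarrow> imat" where
  "LeI k i l = (if blk n l = blk n i then id_mat i l else if blk n i < blk n l then 0
     else - mm (Sc (blk n i)) M (polyR (Sc (blk n i)) Rm om k) i l)"

definition Err :: "nat \<Rightarrow> imat" where "Err k = mat_diff Linv (LeI k)"

lemma Err_formula:
  assumes i: "i \<in> Bk N" and l: "l \<in> Sc N"
  shows "Err k i l = mm (Sc N) Linv (pw (Sc N) Rm k) i l"
proof -
  have bi: "blk n i = N" using i in_Bk by simp
  have "blk n l < N" using l in_Sc by simp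
  then have "LeI k i l = - mm (Sc N) M (polyR (Sc N) Rm om k) i l" using bi by (simp add: LeI_def)
  then show ?thesis using W_decomp[OF i l, of k] by (simp add: Err_def mat_diff_def)
qed

lemma Err_zero: "blk n i \<le> blk n l \<Longrightarrow> Err k i l = 0"
proof -
  assume a: "blk n i \<le> blk n l"
  show ?thesis
  proof (cases "blk n l = blk n i")
    case True then show ?thesis using Linv_diag by (simp add: Err_def mat_diff_def LeI_def)
  next
    case False
    then have "blk n i < blk n l" using a by simp
    moreover then have "Linv i l = 0" using lower_blk[OF bs Linvlow, of i l] by fastforce
    ultimately show ?thesis using False by (simp add: Err_def mat_diff_def LeI_def)
  qed
qed

lemma Err_blk:
  assumes jN: "j < N" and cond: "s = 0 \<or> (s + k) * b0 + j < N"
  shows "bnd (Bk j) (Bk N) (Err k) ((Bc / Cc) * qq ^ s * qq ^ k)"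
proof -
  define F where "F = {t \<in> Sc N. blk n t \<le> j + k * b0}"
  have finF: "finite F" by (simp add: F_def)
  have FS: "F \<subseteq> Sc N" by (auto simp: F_def)
  have BjS: "Bk j \<subseteq> Sc N" using jN in_Bk in_Sc by auto
  have b1: "bnd F (Bk N) Linv ((Bc / Cc) * qq ^ s)"
  proof (cases "s = 0")
    case True
    then show ?thesis using bnd_sub[OF W_bnd finite_lessThan fin_Bk FS order_refl] by simp
  next
    case False
    then have c: "(s + k) * b0 + j < N" using cond by simp
    show ?thesis
    proof (rule Linv_far[OF FS])
      fix t assume "t \<in> F"
      then have "blk n t \<le> j + k * b0" by (simp add: F_def)
      then show "s * b0 + blk n t < N" using c by (simp add: algebra_simps)
    qed
  qed
  have b2: "bnd (Bk j) F (pw (Sc N) Rm k) (qq ^ k)"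
    by (rule bnd_sub[OF pw_bnd[OF finite_lessThan] finite_lessThan finite_lessThan BjS FS])
  from bnd_comp[OF finF b2 b1]
  have "bnd (Bk j) (Bk N) (mm F Linv (pw (Sc N) Rm k)) ((Bc / Cc) * qq ^ s * qq ^ k)" .
  then show ?thesis
  proof (rule bnd_cong)
    fix i l assume i: "i \<in> Bk N" and l: "l \<in> Bk j"
    have lS: "l \<in> Sc N" using l BjS by auto
    have "mm (Sc N) Linv (pw (Sc N) Rm k) i l = mm F Linv (pw (Sc N) Rm k) i l"
      unfolding mm_def
    proof (rule sum.mono_neutral_right[OF finite_lessThan FS], rule ballI)
      fix t assume t: "t \<in> Sc N - F"
      show "Linv i t * pw (Sc N) Rm k t l = 0"
      proof (rule ccontr)
        assume "Linv i t * pw (Sc N) Rm k t l \<noteq> 0"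
        then have "pw (Sc N) Rm k t l \<noteq> 0" by auto
        then have "bd t l \<le> real k * b0" by (rule pw_bd)
        moreover have "blk n l = j" using l in_Bk by simp
        ultimately have "real (blk n t) \<le> real j + real k * b0" by (simp add: bd_def dist_real_def)
        then have "blk n t \<le> j + k * b0" by (simp flip: of_nat_mult of_nat_add)
        then show False using t by (simp add: F_def)
      qed
    qed
    then show "mm F Linv (pw (Sc N) Rm k) i l = Err k i l" using Err_formula[OF i lS] by simp
  qed
qed

definition fE :: "nat \<Rightarrow> nat \<Rightarrow> real" where
  "fE k m = (if m = 0 then 0 else (Bc / Cc) * qq ^ k * qq ^ ((m - 1) div b0 - k))"

lemma fE0: "0 \<le> fE k m" using Bc Cc qq by (simp add: fE_def)

lemma Err_blk_f:
  assumes "j \<le> N"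
  shows "bnd (Bk j) (Bk N) (Err k) (fE k (N - j))"
proof (cases "j = N")
  case True
  then show ?thesis using bnd_zero[of "Bk N" "Bk N" "Err k"] Err_zero in_Bk by (simp add: fE_def)
next
  case False
  then have jN: "j < N" using assms by simp
  define s where "s = (N - j - 1) div b0 - k"
  have cond: "s = 0 \<or> (s + k) * b0 + j < N"
  proof (cases "s = 0")
    case False
    then have sk: "s + k = (N - j - 1) div b0" by (simp add: s_def)
    have dd: "(N - j - 1) div b0 * b0 \<le> N - j - 1" by (simp add: div_times_less_eq_dividend)
    have "(s + k) * b0 \<le> N - j - 1" using sk dd by simp
    then show ?thesis using jN by linarith
  qed simp
  from Err_blk[OF jN cond] show ?thesis using jN by (simp add: fE_def s_def mult_ac)
qed

definition epsE :: "nat \<Rightarrow> real" where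
  "epsE k = (Bc / Cc) * qq ^ k * (b0 * (k + 1 / (1 - qq)))"

lemma sum_fE: "(\<Sum>m<K. fE k m) \<le> epsE k"
proof -
  let ?c = "(Bc / Cc) * qq ^ k"
  have c0: "0 \<le> ?c" using Bc Cc qq by simp
  have "(\<Sum>m<K. fE k m) \<le> fE k 0 + (\<Sum>m<K. ?c * qq ^ (m div b0 - k))"
    by (rule shift0_sum) (use c0 qq Bc Cc in \<open>auto simp: fE_def intro!: divide_nonneg_nonneg mult_nonneg_nonneg\<close>)
  also have "\<dots> = ?c * (\<Sum>m<K. qq ^ (m div b0 - k))" by (simp add: fE_def sum_distrib_left)
  also have "\<dots> \<le> ?c * (b0 * (\<Sum>t<K. qq ^ (t - k)))"
    using c0 qq b0pos by (intro mult_left_mono group_div_sum[where g="\<lambda>t. qq ^ (t - k)"]) auto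
  also have "\<dots> \<le> ?c * (b0 * (k + 1 / (1 - qq)))"
    using c0 qq by (intro mult_left_mono shifted_geom) auto
  finally show ?thesis by (simp add: epsE_def)
qed

lemma Err_sec: "bnd (Sc K) (Sc K) (Err k) (epsE k)"
proof -
  have "bnd (Sc K) (Sc K) (Err k) (\<Sum>m<K. fE k m)"
  proof (rule conv_bnd[OF bs fE0])
    fix N j assume "N < K" "j \<le> N"
    then show "bnd (Bk j) (Bk N) (Err k) (fE k (N - j))" by (simp add: Err_blk_f)
  next
    fix N j i l assume "N < j" "i \<in> Bk N" "l \<in> Bk j"
    then show "Err k i l = 0" using Err_zero in_Bk by simp
  qed
  then show ?thesis using sum_fE by (rule bnd_mono)
qed

lemma Leinv_sec: "bnd (Sc K) (Sc K) (LeI k) (LamW + epsE k)"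
proof -
  from bnd_diff[OF Linv_sec Err_sec] show ?thesis
    by (rule bnd_cong) (simp add: Err_def mat_diff_def)
qed

lemma epsE_small:
  assumes "0 < \<eta>"
  shows "\<exists>k\<ge>1. epsE k \<le> \<eta>"
proof -
  have q1: "norm qq < 1" using qq by simp
  have "(\<lambda>k. (Bc / Cc) * b0 * (of_nat k * qq ^ k + qq ^ k * (1 / (1 - qq)))) \<longlonglongrightarrow> (Bc / Cc) * b0 * (0 + 0 * (1 / (1 - qq)))"
    by (intro tendsto_intros powser_times_n_limit_0[OF q1] LIMSEQ_power_zero q1)
  then have lim: "(\<lambda>k. epsE k) \<longlonglongrightarrow> 0"
    by (simp add: epsE_def algebra_simps)
  from order_tendstoD(2)[OF lim assms] obtain N where N: "\<And>k. k \<ge> N \<Longrightarrow> epsE k < \<eta>"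
    by (auto simp: eventually_sequentially)
  show ?thesis using N[of "max N 1"] by (intro exI[of _ "max N 1"]) auto
qed

lemma rLeinv: "rsupp n (LeI k)"
  unfolding rsupp_def
proof (intro allI impI)
  fix i l assume "LeI k i l \<noteq> 0"
  then have "blk n l \<le> blk n i" by (auto simp: LeI_def split: if_splits)
  then show "l < r i" using lt_n_iff[OF bs] by (simp add: less_Suc_eq_le)
qed

lemma rErr: "rsupp n (Err k)"
  unfolding rsupp_def Err_def mat_diff_def
proof (intro allI impI)
  fix i l assume "Linv i l - LeI k i l \<noteq> 0"
  then have "Linv i l \<noteq> 0 \<or> LeI k i l \<noteq> 0" by auto
  then show "l < r i" using rLeinv[of k] rLinv unfolding rsupp_def by blast
qed

lemma Leinv_diag_blk: "blk n l = blk n i \<Longrightarrow> LeI k i l = id_mat i l"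
  by (simp add: LeI_def)

end


lemma qf_transpose: "qf S (\<lambda>i j. A j i) x = qf S A x"
proof -
  have "qf S (\<lambda>i j. A j i) x = (\<Sum>i\<in>S. \<Sum>j\<in>S. x i * A j i * x j)"
    by (simp add: qf_def mv_def sum_distrib_left mult.assoc)
  also have "\<dots> = (\<Sum>j\<in>S. \<Sum>i\<in>S. x i * A j i * x j)" by (rule sum.swap)
  also have "\<dots> = qf S A x" by (simp add: qf_def mv_def sum_distrib_left mult_ac)
  finally show ?thesis .
qed

lemma ell_transpose: "ell S A C \<Longrightarrow> ell S (\<lambda>i j. A j i) C"
  unfolding ell_def using qf_transpose[of S A] by simp

lemma right_ell_div:
  assumes S: "finite S" and T: "finite T" and C: "0 < C" and eY: "ell S (\<lambda>a b. Y b a) C"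
    and b: "bnd S T (mm S X Y) c"
  shows "bnd S T X (c / C)"
proof -
  have c0: "0 \<le> c" using b by (simp add: bnd_def)
  have bt: "bnd T S (\<lambda>i j. mm S X Y j i) c" by (rule bnd_transpose[OF S T b])
  have "bnd T S (\<lambda>a b. X b a) (c / C)"
    unfolding bnd_def
  proof (intro conjI allI)
    show "0 \<le> c / C" using c0 C by simp
    fix z :: iseq
    define w where "w = mv T (\<lambda>a b. X b a) z"
    have "mv T (\<lambda>i j. mm S X Y j i) z = mv T (mm S (\<lambda>a b. Y b a) (\<lambda>a b. X b a)) z"
      by (simp add: mm_def mult.commute)
    also have "\<dots> = mv S (\<lambda>a b. Y b a) w" by (simp add: mv_mm[OF S] w_def)
    finally have eq: "mv T (\<lambda>i j. mm S X Y j i) z = mv S (\<lambda>a b. Y b a) w" .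
    have "C * L2_set w S \<le> L2_set (mv S (\<lambda>a b. Y b a) w) S" by (rule ell_lower[OF S C eY])
    also have "\<dots> \<le> c * L2_set z T"
    proof -
      from bt have "L2_set (mv T (\<lambda>i j. mm S X Y j i) z) S \<le> c * L2_set z T" unfolding bnd_def by blast
      then show ?thesis unfolding eq .
    qed
    finally show "L2_set w S \<le> c / C * L2_set z T" using C by (simp add: field_simps)
  qed
  from bnd_transpose[OF T S this] show ?thesis by simp
qed

lemma bnd_union_cols:
  assumes S1: "finite S1" and S2: "finite S2" and disj: "S1 \<inter> S2 = {}"
    and b1: "bnd S1 T A a" and b2: "bnd S2 T A b"
  shows "bnd (S1 \<union> S2) T A (a + b)"
  unfolding bnd_def
proof (intro conjI allI)
  show "0 \<le> a + b" using b1 b2 by (simp add: bnd_def)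
  fix x :: iseq
  have "mv (S1 \<union> S2) A x = (\<lambda>i. mv S1 A x i + mv S2 A x i)"
    unfolding mv_def using S1 S2 disj by (simp add: sum.union_disjoint)
  then have "L2_set (mv (S1 \<union> S2) A x) T \<le> L2_set (mv S1 A x) T + L2_set (mv S2 A x) T"
    using L2_set_triangle_ineq by metis
  also have "\<dots> \<le> a * L2_set x S1 + b * L2_set x S2" using b1 b2 by (intro add_mono) (auto simp: bnd_def)
  also have "\<dots> \<le> a * L2_set x (S1 \<union> S2) + b * L2_set x (S1 \<union> S2)"
    using b1 b2 S1 S2 by (intro add_mono mult_left_mono L2_set_subset) (auto simp: bnd_def)
  finally show "L2_set (mv (S1 \<union> S2) A x) T \<le> (a + b) * L2_set x (S1 \<union> S2)" by (simp add: algebra_simps)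
qed

context LU begin

lemma U_diag_ell: "ell (Bk j) U Cc"
  unfolding ell_def
proof
  fix x :: iseq
  let ?T = "Sc (Suc j)"
  define y where "y = mv (Bk j) (\<lambda>a b. Linv b a) x"
  have BT: "Bk j \<subseteq> ?T" using Sc_Bk by auto
  have yx: "y b = x b" if "b \<in> Bk j" for b
  proof -
    have "y b = (\<Sum>i\<in>Bk j. if i = b then x i else 0)"
      unfolding y_def mv_def using that Linv_diag in_Bk by (intro sum.cong refl) (auto simp: id_mat_def)
    then show ?thesis using that fin_Bk by simp
  qed
  have inner: "(\<Sum>a\<in>?T. y a * M a b) = (\<Sum>i\<in>Bk j. x i * U i b)" for b
  proof -
    have "(\<Sum>a\<in>?T. y a * M a b) = (\<Sum>a\<in>?T. \<Sum>i\<in>Bk j. x i * (Linv i a * M a b))"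
      unfolding y_def mv_def by (intro sum.cong refl) (simp add: sum_distrib_left sum_distrib_right mult_ac)
    also have "\<dots> = (\<Sum>i\<in>Bk j. \<Sum>a\<in>?T. x i * (Linv i a * M a b))" by (rule sum.swap)
    also have "\<dots> = (\<Sum>i\<in>Bk j. x i * (\<Sum>a\<in>?T. Linv i a * M a b))"
      by (simp add: sum_distrib_left)
    also have "\<dots> = (\<Sum>i\<in>Bk j. x i * U i b)"
      using U_eq in_Bk by (intro sum.cong refl) simp
    finally show ?thesis .
  qed
  have "qf ?T M y = (\<Sum>a\<in>?T. \<Sum>b\<in>?T. y a * M a b * y b)"
    by (simp add: qf_def mv_def sum_distrib_left mult.assoc)
  also have "\<dots> = (\<Sum>b\<in>?T. \<Sum>a\<in>?T. y a * M a b * y b)" by (rule sum.swap)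
  also have "\<dots> = (\<Sum>b\<in>?T. (\<Sum>a\<in>?T. y a * M a b) * y b)"
    by (simp add: sum_distrib_right)
  also have "\<dots> = (\<Sum>b\<in>?T. (\<Sum>i\<in>Bk j. x i * U i b) * y b)" by (simp add: inner)
  also have "\<dots> = (\<Sum>b\<in>Bk j. (\<Sum>i\<in>Bk j. x i * U i b) * y b)"
  proof (rule sum.mono_neutral_right[OF finite_lessThan BT], rule ballI)
    fix b assume b: "b \<in> ?T - Bk j"
    then have "blk n b < j" using in_Bk in_Sc by (auto simp: less_Suc_eq)
    then have "U i b = 0" if "i \<in> Bk j" for i using upper_blk[OF bs Uup, of i b] that in_Bk by fastforce
    then show "(\<Sum>i\<in>Bk j. x i * U i b) * y b = 0" by simp
  qed
  also have "\<dots> = (\<Sum>b\<in>Bk j. \<Sum>i\<in>Bk j. x i * U i b * x b)"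
    using yx by (intro sum.cong refl) (simp add: sum_distrib_right)
  also have "\<dots> = (\<Sum>i\<in>Bk j. \<Sum>b\<in>Bk j. x i * U i b * x b)" by (rule sum.swap)
  also have "\<dots> = qf (Bk j) U x"
    unfolding qf_def mv_def by (simp add: sum_distrib_left mult.assoc)
  finally have qeq: "qf ?T M y = qf (Bk j) U x" .
  have "L2_set x (Bk j) = L2_set y (Bk j)" using yx by (intro L2_set_cong) auto
  also have "\<dots> \<le> L2_set y ?T" using BT by (intro L2_set_subset) auto
  finally have "Cc * (L2_set x (Bk j))\<^sup>2 \<le> Cc * (L2_set y ?T)\<^sup>2"
    using Cc by (intro mult_left_mono power_mono) auto
  also have "\<dots> \<le> qf ?T M y" using M_ell[OF finite_lessThan] by (simp add: ell_def)
  finally show "Cc * (L2_set x (Bk j))\<^sup>2 \<le> qf (Bk j) U x" using qeq by simp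
qed

lemma U_col: "bnd (Bk j) (Sc j) U (LamW * Bc)"
proof -
  have "bnd (Bk j) (Sc j) (mm (Sc j) Linv M) (LamW * Bc)"
    by (rule bnd_comp[OF finite_lessThan M_bnd[OF fin_Bk finite_lessThan] Linv_sec])
  then show ?thesis
  proof (rule bnd_cong)
    fix i l assume i: "i \<in> Sc j" and "l \<in> Bk j"
    have "r i \<le> n j" using i in_Sc bs_mono[OF bs] by (simp add: Suc_le_eq)
    then have "mm (Sc j) Linv M i l = (\<Sum>t<r i. Linv i t * M t l)"
      unfolding mm_def using rsupp_zero[OF rLinv] by (intro sum.mono_neutral_right) auto
    then show "mm (Sc j) Linv M i l = U i l" using U_eq by simp
  qed
qed

lemma L_eq:
  assumes i: "i \<in> Bk N" and l: "l \<in> Bk j" and jN: "j < N"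
  shows "mm (Bk j) L U i l = M i l - mm (Sc j) L U i l"
proof -
  have le: "Sc (Suc j) \<subseteq> {..<r i}" using i jN in_Bk bs_mono[OF bs] by auto
  have "M i l = (\<Sum>s<r i. L i s * U s l)" by (rule M_eq)
  also have "\<dots> = (\<Sum>s\<in>Sc (Suc j). L i s * U s l)"
  proof (rule sum.mono_neutral_right[OF finite_lessThan le], rule ballI)
    fix s assume "s \<in> {..<r i} - Sc (Suc j)"
    then have "\<not> blk n s < Suc j" using in_Sc by blast
    then have "j < blk n s" by simp
    then have "U s l = 0" using upper_blk[OF bs Uup, of s l] l in_Bk by fastforce
    then show "L i s * U s l = 0" by simp
  qed
  also have "\<dots> = mm (Sc j) L U i l + mm (Bk j) L U i l"
    unfolding mm_def using Sc_Bk fin_Bk by (simp add: sum.union_disjoint)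
  finally show ?thesis by simp
qed

definition aL :: real where "aL = 1 + LamW * Bc / Cc"
definition Gam :: "nat \<Rightarrow> real" where "Gam t = (Bc / Cc) * (\<Sum>u<t. aL ^ u)"

lemma aL0: "1 \<le> aL"
proof -
  have "0 \<le> LamW" using Linv_sec[of 0] by (simp add: bnd_def)
  then show ?thesis using Bc Cc by (simp add: aL_def)
qed

lemma Gam0: "0 \<le> Gam t" using Bc Cc aL0 by (simp add: Gam_def sum_nonneg)

lemma Gam_Suc: "Gam (Suc t) = Bc / Cc + aL * Gam t"
proof -
  have "(\<Sum>u<Suc t. aL ^ u) = 1 + aL * (\<Sum>u<t. aL ^ u)"
    by (simp only: sum.lessThan_Suc_shift) (simp del: sum.lessThan_Suc add: sum_distrib_left)
  then show ?thesis by (simp add: Gam_def algebra_simps)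
qed

lemma Gam_mono: "s \<le> t \<Longrightarrow> Gam s \<le> Gam t"
  unfolding Gam_def using Bc Cc aL0 by (intro mult_left_mono sum_mono2) auto

lemma M_blk_bnd: "bnd (Bk j) (Bk N) M (if N \<le> j + b0 then Bc else 0)"
proof (cases "N \<le> j + b0")
  case True then show ?thesis using M_bnd[OF fin_Bk fin_Bk] by simp
next
  case False
  have "M i l = 0" if "i \<in> Bk N" "l \<in> Bk j" for i l
  proof (rule ccontr)
    assume "M i l \<noteq> 0"
    then have "dist (real (blk n i)) (real (blk n l)) \<le> b0" by (rule M_blk)
    then show False using that False in_Bk by (simp add: dist_real_def)
  qed
  then show ?thesis using False by (simp add: bnd_zero)
qed

lemma L_rec: "j \<le> N \<Longrightarrow> bnd (Sc j) (Bk N) L (Gam (j + b0 - N))"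
proof (induction j)
  case 0
  have "bnd (Sc 0) (Bk N) L 0" using bs by (intro bnd_zero) (simp add: block_structure_def)
  then show ?case using Gam0 by (rule bnd_mono)
next
  case (Suc j)
  then have jN: "j < N" by simp
  have IH: "bnd (Sc j) (Bk N) L (Gam (j + b0 - N))" using Suc by simp
  let ?lam = "Gam (j + b0 - N)" and ?Mb = "if N \<le> j + b0 then Bc else 0"
  have b3: "bnd (Bk j) (Bk N) (mm (Sc j) L U) (?lam * (LamW * Bc))"
    by (rule bnd_comp[OF finite_lessThan U_col IH])
  have b4: "bnd (Bk j) (Bk N) (mm (Bk j) L U) (?Mb + ?lam * (LamW * Bc))"
    using bnd_diff[OF M_blk_bnd b3] by (rule bnd_cong) (use L_eq jN in auto)
  have b5: "bnd (Bk j) (Bk N) L ((?Mb + ?lam * (LamW * Bc)) / Cc)"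
    by (rule right_ell_div[OF fin_Bk fin_Bk Cc(1) ell_transpose[OF U_diag_ell] b4])
  have "bnd (Sc j \<union> Bk j) (Bk N) L (?lam + (?Mb + ?lam * (LamW * Bc)) / Cc)"
    by (rule bnd_union_cols[OF finite_lessThan fin_Bk Sc_Bk(2) IH b5])
  moreover have "?lam + (?Mb + ?lam * (LamW * Bc)) / Cc \<le> Gam (Suc j + b0 - N)"
  proof (cases "N \<le> j + b0")
    case True
    then have "Suc j + b0 - N = Suc (j + b0 - N)" by simp
    then show ?thesis using True Cc by (simp add: Gam_Suc aL_def field_simps)
  next
    case False
    then have "j + b0 - N = 0" by simp
    then show ?thesis using False Gam0 by (simp add: Gam_def)
  qed
  ultimately have "bnd (Sc j \<union> Bk j) (Bk N) L (Gam (Suc j + b0 - N))" by (rule bnd_mono)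
  then show ?case by (simp only: Sc_Bk(1)[of j])
qed

definition fL :: "nat \<Rightarrow> real" where
  "fL m = (if m = 0 then 1 else if m \<le> b0 then Gam b0 else 0)"

lemma fL0: "0 \<le> fL m" using Gam0 by (simp add: fL_def)

lemma L_blk:
  assumes "j \<le> N"
  shows "bnd (Bk j) (Bk N) L (fL (N - j))"
proof (cases "j = N")
  case True
  have "bnd (Bk N) (Bk N) id_mat 1" by (rule bnd_id[OF fin_Bk])
  then have "bnd (Bk N) (Bk N) L 1" by (rule bnd_cong) (use L_diag in_Bk in auto)
  then show ?thesis using True by (simp add: fL_def)
next
  case False
  then have jN: "j < N" using assms by simp
  have "bnd (Sc (Suc j)) (Bk N) L (Gam (Suc j + b0 - N))" by (rule L_rec) (use jN in simp)
  moreover have "Bk j \<subseteq> Sc (Suc j)" using Sc_Bk(1)[of j] by blast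
  ultimately have b: "bnd (Bk j) (Bk N) L (Gam (Suc j + b0 - N))"
    using bnd_sub[OF _ finite_lessThan fin_Bk _ order_refl] by blast
  show ?thesis
  proof (cases "N - j \<le> b0")
    case True
    then have "Gam (Suc j + b0 - N) \<le> Gam b0" using jN by (intro Gam_mono) simp
    moreover have "fL (N - j) = Gam b0" using True jN by (simp add: fL_def)
    ultimately show ?thesis using b bnd_mono by metis
  next
    case False
    then have "Suc j + b0 - N = 0" by simp
    then show ?thesis using b False jN by (simp add: fL_def Gam_def)
  qed
qed

definition LamL :: real where "LamL = 1 + b0 * Gam b0"

lemma LamL1: "1 \<le> LamL" using Gam0 by (simp add: LamL_def)

lemma sum_fL: "(\<Sum>m<K. fL m) \<le> LamL"
proof -
  have "(\<Sum>m<K. fL m) \<le> fL 0 + (\<Sum>m<K. if m < b0 then Gam b0 else 0)"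
    by (rule shift0_sum) (auto simp: fL_def Gam0)
  also have "(\<Sum>m<K. if m < b0 then Gam b0 else 0) = (\<Sum>m\<in>{..<K} \<inter> {..<b0}. Gam b0)"
    by (simp add: sum.If_cases Int_def)
  also have "\<dots> \<le> (\<Sum>m\<in>{..<b0}. Gam b0)" using Gam0 by (intro sum_mono2) auto
  finally show ?thesis by (simp add: LamL_def fL_def)
qed

lemma L_sec: "bnd (Sc K) (Sc K) L LamL"
proof -
  have "bnd (Sc K) (Sc K) L (\<Sum>m<K. fL m)"
  proof (rule conv_bnd[OF bs fL0])
    fix N j assume "N < K" "j \<le> N"
    then show "bnd (Bk j) (Bk N) L (fL (N - j))" by (simp add: L_blk)
  next
    fix N j i l assume "N < j" "i \<in> Bk N" "l \<in> Bk j"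
    then show "L i l = 0" using lower_blk[OF bs Llow, of i l] in_Bk by fastforce
  qed
  then show ?thesis using sum_fL by (rule bnd_mono)
qed

end


function rinv :: "(nat \<Rightarrow> nat) \<Rightarrow> imat \<Rightarrow> nat \<Rightarrow> nat \<Rightarrow> real" where
  "rinv n A i j = (if blk n i \<le> blk n j then id_mat i j
     else - (\<Sum>l<min (n (blk n i)) i. A i l * rinv n A l j))"
  by auto
termination by (relation "Wellfounded.measure (\<lambda>(n, A, i, j). i)") auto

declare rinv.simps[simp del]

lemma bnd_limit:
  assumes b: "\<And>m. bnd S T A (a + \<theta> ^ m * c)" and th: "0 \<le> \<theta>" "\<theta> < 1" and a0: "0 \<le> a"
  shows "bnd S T A a"
  unfolding bnd_def
proof (intro conjI allI)
  show "0 \<le> a" by (rule a0)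
  fix x :: iseq
  have lim: "(\<lambda>m. (a + \<theta> ^ m * c) * L2_set x S) \<longlonglongrightarrow> (a + 0 * c) * L2_set x S"
    by (intro tendsto_intros LIMSEQ_power_zero) (use th in simp)
  show "L2_set (mv S A x) T \<le> a * L2_set x S"
    using LIMSEQ_le_const[OF lim] b by (simp add: bnd_def)
qed

lemma rsupp_out:
  assumes bs: "block_structure n" and A: "rsupp n A" and B: "rsupp n B" and t: "n (Suc (blk n i)) \<le> t"
  shows "(\<Sum>l<n (Suc (blk n i)). A i l * B l t) = 0"
proof (rule sum.neutral, rule ballI, rule ccontr)
  fix l assume l: "l \<in> {..<n (Suc (blk n i))}" and nz: "A i l * B l t \<noteq> 0"
  then have "blk n t \<le> blk n l" using rsupp_blk[OF bs B] by auto
  moreover have "blk n l \<le> blk n i" using l lt_n_iff[OF bs] by (simp add: less_Suc_eq_le)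
  ultimately have "t < n (Suc (blk n i))" using lt_n_iff[OF bs] by (simp add: less_Suc_eq_le)
  then show False using t by simp
qed

locale unitlow =
  fixes n :: "nat \<Rightarrow> nat" and A :: imat
  assumes bs: "block_structure n" and rA: "rsupp n A"
    and dA: "\<And>i l. blk n l = blk n i \<Longrightarrow> A i l = id_mat i l"
begin

abbreviation "Y \<equiv> rinv n A"

lemma Y_eq: "Y i j = (if blk n i \<le> blk n j then id_mat i j else - (\<Sum>l<n (blk n i). A i l * Y l j))"
proof -
  have "min (n (blk n i)) i = n (blk n i)" using blk_bounds(1)[OF bs] by simp
  then show ?thesis by (simp add: rinv.simps[of n A i j])
qed

lemma rY: "rsupp n Y"
  unfolding rsupp_def
proof (intro allI impI)
  fix i l assume nz: "Y i l \<noteq> 0"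
  have "blk n l \<le> blk n i"
  proof (cases "blk n i \<le> blk n l")
    case True
    then have "id_mat i l \<noteq> 0" using nz Y_eq[of i l] by simp
    then show ?thesis by (simp add: id_mat_def split: if_splits)
  qed simp
  then show "l < n (Suc (blk n i))" using lt_n_iff[OF bs] by (simp add: less_Suc_eq_le)
qed

lemma split_r: "(\<Sum>l<n (Suc N). g l) = (\<Sum>l<n N. g l) + (\<Sum>l\<in>blockset n N. g l)"
proof -
  have "{..<n (Suc N)} = {..<n N} \<union> blockset n N" "{..<n N} \<inter> blockset n N = {}"
    using bs_mono[OF bs, of N "Suc N"] by (auto simp: blockset_def)
  then show ?thesis by (simp add: sum.union_disjoint blockset_def)
qed

lemma AY: "(\<Sum>l<n (Suc (blk n i)). A i l * Y l t) = id_mat i t"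
proof (cases "t < n (Suc (blk n i))")
  case False
  then have "n (Suc (blk n i)) \<le> t" by simp
  from rsupp_out[OF bs rA rY this] show ?thesis using False blk_bounds(2)[OF bs, of i] by (auto simp: id_mat_def)
next
  case True
  let ?N = "blk n i"
  have iB: "i \<in> blockset n ?N" using in_blockset_iff[OF bs] by simp
  have "(\<Sum>l\<in>blockset n ?N. A i l * Y l t) = (\<Sum>l\<in>blockset n ?N. if l = i then Y l t else 0)"
    using dA in_blockset_iff[OF bs] by (intro sum.cong refl) (auto simp: id_mat_def)
  also have "\<dots> = Y i t" using iB by (simp add: blockset_def)
  finally have e2: "(\<Sum>l\<in>blockset n ?N. A i l * Y l t) = Y i t" .
  show ?thesis
  proof (cases "?N \<le> blk n t")
    case True
    have "(\<Sum>l<n ?N. A i l * Y l t) = 0"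
    proof (rule sum.neutral, rule ballI)
      fix l assume "l \<in> {..<n ?N}"
      then have "blk n l < ?N" using lt_n_iff[OF bs] by simp
      then have "Y l t = id_mat l t" using True Y_eq[of l t] by simp
      moreover have "l \<noteq> t" using \<open>blk n l < ?N\<close> True by auto
      ultimately show "A i l * Y l t = 0" by (simp add: id_mat_def)
    qed
    then show ?thesis using e2 split_r[where N="blk n i" and g="\<lambda>l. A i l * Y l t"] True Y_eq[of i t] by simp
  next
    case False
    then have "Y i t = - (\<Sum>l<n ?N. A i l * Y l t)" using Y_eq[of i t] by simp
    moreover have "i \<noteq> t" using False by auto
    ultimately show ?thesis using e2 split_r[where N="blk n i" and g="\<lambda>l. A i l * Y l t"] by (simp add: id_mat_def)
  qed
qed

lemma YA: "(\<Sum>l<n (Suc (blk n i)). Y i l * A l t) = id_mat i t"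
proof (induction i arbitrary: t rule: less_induct)
  case (less i)
  show ?case
  proof (cases "t < n (Suc (blk n i))")
    case False
    then have "n (Suc (blk n i)) \<le> t" by simp
    from rsupp_out[OF bs rY rA this] show ?thesis using False blk_bounds(2)[OF bs, of i] by (auto simp: id_mat_def)
  next
    case True
    let ?N = "blk n i"
    have inner: "(\<Sum>l<n ?N. Y m l * A l t) = id_mat m t" if m: "m < n ?N" for m
    proof -
      have mi: "m < i" using m blk_bounds(1)[OF bs, of i] by simp
      have rm: "n (Suc (blk n m)) \<le> n ?N" using m lt_n_iff[OF bs] bs_mono[OF bs] by (simp add: Suc_le_eq)
      have "(\<Sum>l<n ?N. Y m l * A l t) = (\<Sum>l<n (Suc (blk n m)). Y m l * A l t)"
        using rsupp_zero[OF rY] rm by (intro sum.mono_neutral_right) auto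
      also have "\<dots> = id_mat m t" by (rule less.IH[OF mi])
      finally show ?thesis .
    qed
    have e2: "(\<Sum>l\<in>blockset n ?N. Y i l * A l t) = A i t"
    proof -
      have "(\<Sum>l\<in>blockset n ?N. Y i l * A l t) = (\<Sum>l\<in>blockset n ?N. if l = i then A l t else 0)"
        using Y_eq in_blockset_iff[OF bs] by (intro sum.cong refl) (auto simp: id_mat_def)
      also have "\<dots> = A i t" using in_blockset_iff[OF bs, of i ?N] by (simp add: blockset_def)
      finally show ?thesis .
    qed
    have "(\<Sum>l<n ?N. Y i l * A l t) = (\<Sum>l<n ?N. - (\<Sum>m<n ?N. A i m * Y m l) * A l t)"
      using Y_eq lt_n_iff[OF bs] by (intro sum.cong refl) auto
    also have "\<dots> = - (\<Sum>l<n ?N. \<Sum>m<n ?N. A i m * (Y m l * A l t))"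
      by (simp add: sum_distrib_right sum_negf mult.assoc)
    also have "\<dots> = - (\<Sum>m<n ?N. \<Sum>l<n ?N. A i m * (Y m l * A l t))"
      by (subst sum.swap) simp
    also have "\<dots> = - (\<Sum>m<n ?N. A i m * id_mat m t)"
      using inner by (simp add: sum_distrib_left[symmetric])
    also have "\<dots> = - (if t < n ?N then A i t else 0)"
    proof -
      have "(\<Sum>m<n ?N. A i m * id_mat m t) = (\<Sum>m<n ?N. if m = t then A i m else 0)"
        by (intro sum.cong refl) (auto simp: id_mat_def)
      then show ?thesis by simp
    qed
    finally have e1: "(\<Sum>l<n ?N. Y i l * A l t) = - (if t < n ?N then A i t else 0)" .
    show ?thesis
    proof (cases "t < n ?N")
      case True
      then have "i \<noteq> t" using blk_bounds(1)[OF bs, of i] by auto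
      then show ?thesis using e1 e2 True split_r[where N="blk n i" and g="\<lambda>l. Y i l * A l t"] by (simp add: id_mat_def)
    next
      case False
      then have "blk n t = ?N" using \<open>t < n (Suc (blk n i))\<close> lt_n_iff[OF bs, of t] by (simp add: less_Suc_eq)
      then have "A i t = id_mat i t" using dA by simp
      then show ?thesis using e1 e2 False split_r[where N="blk n i" and g="\<lambda>l. Y i l * A l t"] by simp
    qed
  qed
qed

end

context LU begin

lemma Leinv_unitlow: "unitlow n (LeI k)"
  by unfold_locales (auto simp: bs rLeinv Leinv_diag_blk)

lemma LinvL_sec:
  assumes l: "l \<in> Sc K" and t: "t \<in> Sc K"
  shows "mm (Sc K) Linv L l t = id_mat l t"
proof -
  have rl: "r l \<le> n K" using l in_Sc bs_mono[OF bs] by (simp add: Suc_le_eq)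
  have "mm (Sc K) Linv L l t = (\<Sum>s<r l. Linv l s * L s t)"
    unfolding mm_def using rsupp_zero[OF rLinv] rl by (intro sum.mono_neutral_right) auto
  also have "\<dots> = mat_mult Linv L l t" by (simp add: mat_mult_fin[OF rLinv])
  finally show ?thesis using LinvL by simp
qed

lemma Y_sec_bound:
  assumes th: "epsE k * LamL \<le> 1 / 2"
  shows "bnd (Sc K) (Sc K) (rinv n (LeI k)) (2 * LamL)"
proof -
  interpret U1: unitlow n "LeI k" by (rule Leinv_unitlow)
  let ?S = "Sc K" and ?Y = "rinv n (LeI k)" and ?E = "Err k"
  let ?\<theta> = "epsE k * LamL"
  have e0: "0 \<le> epsE k" using Err_sec[of K k] by (simp add: bnd_def)
  have L0: "0 \<le> LamL" using LamL1 by simp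
  have th0: "0 \<le> ?\<theta>" using e0 L0 by simp
  have YLe: "mm ?S ?Y (LeI k) i s = id_mat i s" if i: "i \<in> ?S" for i s
  proof -
    have ri: "r i \<le> n K" using i in_Sc bs_mono[OF bs] by (simp add: Suc_le_eq)
    have "mm ?S ?Y (LeI k) i s = (\<Sum>l<r i. ?Y i l * LeI k l s)"
      unfolding mm_def using rsupp_zero[OF U1.rY] ri by (intro sum.mono_neutral_right) auto
    then show ?thesis using U1.YA by simp
  qed
  have Yeq: "?Y i t = L i t + mm ?S (mm ?S ?Y ?E) L i t" if i: "i \<in> ?S" and t: "t \<in> ?S" for i t
  proof -
    have "?Y i t = mm ?S ?Y id_mat i t" using t by (simp add: mm_id_right)
    also have "\<dots> = mm ?S ?Y (mm ?S Linv L) i t"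
      unfolding mm_def[of ?S ?Y]
    proof (rule sum.cong[OF refl])
      fix l assume "l \<in> ?S"
      then show "?Y i l * id_mat l t = ?Y i l * mm ?S Linv L l t" using LinvL_sec[of l K t] t by simp
    qed
    also have "\<dots> = mm ?S (mm ?S ?Y Linv) L i t" by (simp add: mm_assoc)
    also have "\<dots> = mm ?S (\<lambda>a b. id_mat a b + mm ?S ?Y ?E a b) L i t"
    proof -
      have "mm ?S ?Y Linv i s = id_mat i s + mm ?S ?Y ?E i s" for s
      proof -
        have "mm ?S ?Y Linv i s = mm ?S ?Y (LeI k) i s + mm ?S ?Y ?E i s"
          by (simp add: mm_def Err_def mat_diff_def sum.distrib[symmetric] algebra_simps)
        then show ?thesis using YLe[OF i] by simp
      qed
      then show ?thesis by (simp add: mm_def)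
    qed
    also have "\<dots> = mm ?S id_mat L i t + mm ?S (mm ?S ?Y ?E) L i t"
      by (simp add: mm_def distrib_right sum.distrib)
    also have "mm ?S id_mat L i t = L i t" using i by (simp add: mm_id_left)
    finally show ?thesis .
  qed
  obtain c0 where c0: "bnd ?S ?S ?Y c0" using bnd_exists[of ?S ?S ?Y] by auto
  have c00: "0 \<le> c0" using c0 by (simp add: bnd_def)
  have iter: "bnd ?S ?S ?Y (LamL * (\<Sum>u<m. ?\<theta> ^ u) + ?\<theta> ^ m * c0)" for m
  proof (induction m)
    case 0 then show ?case using c0 by simp
  next
    case (Suc m)
    let ?c = "LamL * (\<Sum>u<m. ?\<theta> ^ u) + ?\<theta> ^ m * c0"
    have "bnd ?S ?S (mm ?S ?Y ?E) (?c * epsE k)" by (rule bnd_comp[OF finite_lessThan Err_sec Suc.IH])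
    then have "bnd ?S ?S (mm ?S (mm ?S ?Y ?E) L) (?c * epsE k * LamL)"
      by (rule bnd_comp[OF finite_lessThan L_sec])
    from bnd_add[OF L_sec this] have "bnd ?S ?S ?Y (LamL + ?c * epsE k * LamL)"
      by (rule bnd_cong) (use Yeq in simp)
    moreover have "LamL + ?c * epsE k * LamL = LamL * (\<Sum>u<Suc m. ?\<theta> ^ u) + ?\<theta> ^ Suc m * c0"
    proof -
      have "(\<Sum>u<Suc m. ?\<theta> ^ u) = 1 + ?\<theta> * (\<Sum>u<m. ?\<theta> ^ u)"
        by (simp only: sum.lessThan_Suc_shift) (simp del: sum.lessThan_Suc add: sum_distrib_left)
      then show ?thesis by (simp add: algebra_simps)
    qed
    ultimately show ?case by simp
  qed
  have "bnd ?S ?S ?Y (2 * LamL + ?\<theta> ^ m * c0)" for m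
  proof -
    have "(\<Sum>u<m. ?\<theta> ^ u) \<le> 1 / (1 - ?\<theta>)" using th th0 by (intro geom_le) auto
    also have "\<dots> \<le> 2" using th th0 by (simp add: field_simps)
    finally have "LamL * (\<Sum>u<m. ?\<theta> ^ u) \<le> LamL * 2" using L0 by (rule mult_left_mono)
    then have "LamL * (\<Sum>u<m. ?\<theta> ^ u) \<le> 2 * LamL" by (simp add: mult.commute)
    then show ?thesis using iter[of m] bnd_mono by (metis add_right_mono)
  qed
  then show ?thesis by (rule bnd_limit) (use th th0 L0 in auto)
qed

end


context LU begin

lemma LeI_nz:
  assumes k: "1 \<le> k" and nz: "LeI k i l \<noteq> 0"
  shows "d i l \<le> real (k * b0) \<and> bd i l \<le> real (k * b0)"
proof (cases "blk n l = blk n i")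
  case True
  then have "id_mat i l \<noteq> 0" using nz by (simp add: LeI_def)
  then have "i = l" by (simp add: id_mat_def split: if_splits)
  then show ?thesis by (simp add: d_refl bd_refl)
next
  case False
  show ?thesis
  proof (cases "blk n i < blk n l")
    case True then show ?thesis using nz False by (simp add: LeI_def)
  next
    case False2: False
    let ?N = "blk n i"
    have "mm (Sc ?N) M (polyR (Sc ?N) Rm om k) i l \<noteq> 0" using nz False False2 by (simp add: LeI_def)
    then obtain t where "M i t * polyR (Sc ?N) Rm om k t l \<noteq> 0"
      unfolding mm_def by (meson sum.not_neutral_contains_not_neutral)
    then have Mt: "M i t \<noteq> 0" and Pt: "polyR (Sc ?N) Rm om k t l \<noteq> 0" by auto
    have d1: "d i t \<le> b0" using M_d[OF Mt] .
    have d2: "d t l \<le> real (k - 1) * b0"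
      by (rule polyR_sparse[where dl=d, OF d_refl d_tri _ _ Pt]) (use R_nz in auto)
    have e1: "bd i t \<le> b0" using M_blk[OF Mt] by (simp add: bd_def)
    have e2: "bd t l \<le> real (k - 1) * b0" by (rule poly_bd[OF Pt])
    have kk: "real b0 + real (k - 1) * b0 = real (k * b0)" using k by (simp add: algebra_simps of_nat_diff)
    have "d i l \<le> real (k * b0)" using d_tri[of i l t] d1 d2 kk by linarith
    moreover have "bd i l \<le> real (k * b0)" using bd_tri[of i l t] e1 e2 kk by linarith
    ultimately show ?thesis by simp
  qed
qed

end

theorem lemma3p9:
  fixes M L U Linv :: imat and n :: "nat \<Rightarrow> nat" and d :: "nat \<Rightarrow> nat \<Rightarrow> real" and b0 :: nat
  assumes "bounded_l2 M" and "elliptic M"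
    and "block_structure n"
    and "block_banded n b0 M"
    and "nat_metric d" and "in_B d b0 M"
    and "block_lower n L" and "\<forall>i. block_identity n L i" and "block_upper n U"
    and "M = mat_mult L U"
    and "block_lower n Linv" and "mat_mult L Linv = id_mat" and "mat_mult Linv L = id_mat"
  shows "\<exists>K. \<forall>\<epsilon>>0. \<exists>(b::nat) Le Leinv.
           block_lower n Leinv \<and> in_B d b Leinv \<and> (\<forall>i. block_identity n Leinv i) \<and>
           block_banded n b Leinv \<and>
           bounded_l2 (mat_diff Linv Leinv) \<and> opnorm (mat_diff Linv Leinv) \<le> \<epsilon> \<and>
           bounded_l2 Le \<and> bounded_l2 Leinv \<and>
           (\<forall>x. in_l2 x \<longrightarrow> matvec Le (matvec Leinv x) = x \<and> matvec Leinv (matvec Le x) = x) \<and>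
           opnorm Le + opnorm Leinv \<le> K"
proof -
  define b1 where "b1 = max b0 1"
  have bb: "block_banded n b1 M" using assms(4) unfolding block_banded_def b1_def
    by (metis (no_types, opaque_lifting) le_less_trans max.cobounded1 of_nat_le_iff)
  have iB: "in_B d b1 M" using assms(6) unfolding in_B_def b1_def
    by (metis (no_types, opaque_lifting) le_less_trans max.cobounded1 of_nat_le_iff)
  interpret LU M L U Linv n d b1
    by unfold_locales (use assms bb iB in \<open>auto simp: b1_def\<close>)
  define K where "K = 2 * LamL + LamW + 1"
  show ?thesis
  proof (intro exI[of _ K] allI impI)
    fix \<epsilon> :: real assume \<epsilon>: "0 < \<epsilon>"
    define \<eta> where "\<eta> = min \<epsilon> (min 1 (1 / (2 * LamL)))"
    have \<eta>0: "0 < \<eta>" using \<epsilon> LamL1 by (simp add: \<eta>_def)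
    obtain k where k: "1 \<le> k" "epsE k \<le> \<eta>" using epsE_small[OF \<eta>0] by auto
    have ek1: "epsE k \<le> \<epsilon>" "epsE k \<le> 1" using k by (auto simp: \<eta>_def)
    have "epsE k \<le> 1 / (2 * LamL)" using k by (simp add: \<eta>_def)
    then have ek3: "epsE k * LamL \<le> 1 / 2" using LamL1 by (simp add: field_simps)
    define b where "b = k * b1"
    interpret UL: unitlow n "LeI k" by (rule Leinv_unitlow)
    have bndE: "bounded_l2 (mat_diff Linv (LeI k))" "opnorm (mat_diff Linv (LeI k)) \<le> epsE k"
      using sec_bounded[OF bs rErr Err_sec] by (simp_all add: Err_def)
    have bndY: "bounded_l2 (rinv n (LeI k))" "opnorm (rinv n (LeI k)) \<le> 2 * LamL"
      using sec_bounded[OF bs UL.rY Y_sec_bound[OF ek3]] by simp_all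
    have bndL: "bounded_l2 (LeI k)" "opnorm (LeI k) \<le> LamW + epsE k"
      using sec_bounded[OF bs rLeinv Leinv_sec] by simp_all
    show "\<exists>(b::nat) Le Leinv.
           block_lower n Leinv \<and> in_B d b Leinv \<and> (\<forall>i. block_identity n Leinv i) \<and>
           block_banded n b Leinv \<and>
           bounded_l2 (mat_diff Linv Leinv) \<and> opnorm (mat_diff Linv Leinv) \<le> \<epsilon> \<and>
           bounded_l2 Le \<and> bounded_l2 Leinv \<and>
           (\<forall>x. in_l2 x \<longrightarrow> matvec Le (matvec Leinv x) = x \<and> matvec Leinv (matvec Le x) = x) \<and>
           opnorm Le + opnorm Leinv \<le> K"
    proof -
      have h1: "block_lower n (LeI k)"
        unfolding block_lower_def block_zero_def using in_Bk by (auto simp: LeI_def)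
      have h2: "in_B d b (LeI k)"
        unfolding in_B_def b_def using LeI_nz[OF k(1)] by (meson not_less)
      have h3: "\<forall>i. block_identity n (LeI k) i"
        unfolding block_identity_def using in_Bk by (auto simp: LeI_def id_mat_def)
      have h4: "block_banded n b (LeI k)"
        unfolding block_banded_def block_zero_def
      proof (intro allI impI ballI)
        fix I J a l assume far: "real b < dist (real I) (real J)" and a: "a \<in> Bk I" and l: "l \<in> Bk J"
        show "LeI k a l = 0"
        proof (rule ccontr)
          assume "LeI k a l \<noteq> 0"
          then have "bd a l \<le> real (k * b1)" using LeI_nz[OF k(1)] by blast
          moreover have "bd a l = dist (real I) (real J)" using a l in_Bk by (simp add: bd_def)
          ultimately show False using far by (simp add: b_def)
        qed
      qed
      have h5: "opnorm (mat_diff Linv (LeI k)) \<le> \<epsilon>" using bndE(2) ek1 by simp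
      have h6: "\<forall>x. in_l2 x \<longrightarrow> matvec (rinv n (LeI k)) (matvec (LeI k) x) = x \<and> matvec (LeI k) (matvec (rinv n (LeI k)) x) = x"
      proof (intro allI impI conjI)
        fix x :: iseq
        show "matvec (rinv n (LeI k)) (matvec (LeI k) x) = x"
          by (rule matvec_inverse[OF bs UL.rY rLeinv]) (rule UL.YA)
        show "matvec (LeI k) (matvec (rinv n (LeI k)) x) = x"
          by (rule matvec_inverse[OF bs rLeinv UL.rY]) (rule UL.AY)
      qed
      have h7: "opnorm (rinv n (LeI k)) + opnorm (LeI k) \<le> K"
        using bndY(2) bndL(2) ek1 by (simp add: K_def)
      show ?thesis
        apply (rule exI[of _ b], rule exI[of _ "rinv n (LeI k)"], rule exI[of _ "LeI k"])
        using h1 h2 h3 h4 bndE(1) h5 bndY(1) bndL(1) h6 h7 by blast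
    qed
  qed
qed



end
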